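(* The group $\mathbb{Z}^2$ admits no context-free-preimage left-order. In particular, if a finitely generated group $G$ admits a context-free-preimage left-order, then $G$ does not contain a subgroup isomorphic to $\mathbb{Z}^2$.
   Context: A finite generating set of a group $G$ is a finite set $X$ with a surjective monoid homomorphism $\pi\colon X^*\to G$. A left-order $\prec$ on $G$ with positive cone $P=\{g:1\prec g\}$ is a context-free-preimage left-order if, for a finite generating set $(X,\pi)$ of $G$, the full preimage $\pi^{-1}(P)\subseteq X^*$ is a context-free language (accepted by a nondeterministic pushdown automaton). *)

theory Defs
  imports "HOL-Algebra.Algebra"
begin

text \<open>A transition (q, a, Z, q', beta) means: in state q, reading a (None = epsilon move)
  with Z on top of the stack, go to state q' and replace Z by the word beta.\<close>

type_synonym 'x pda_trans = "(nat \<times> 'x option \<times> nat \<times> nat \<times> nat list) set"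

definition pda_step ::
  "'x pda_trans \<Rightarrow> (nat \<times> 'x list \<times> nat list) \<Rightarrow> (nat \<times> 'x list \<times> nat list) \<Rightarrow> bool" where
  "pda_step \<delta> c c' \<longleftrightarrow>
     (\<exists>q w Z rest a q' beta w'.
        c = (q, w, Z # rest) \<and> (q, a, Z, q', beta) \<in> \<delta> \<and>
        c' = (q', w', beta @ rest) \<and>
        ((a = None \<and> w' = w) \<or> (\<exists>x. a = Some x \<and> w = x # w')))"

definition pda_accepts :: "'x pda_trans \<Rightarrow> nat \<Rightarrow> nat \<Rightarrow> nat set \<Rightarrow> 'x list \<Rightarrow> bool" where
  "pda_accepts \<delta> q0 Z0 F w \<longleftrightarrow>
     (\<exists>f \<gamma>. f \<in> F \<and> (pda_step \<delta>)\<^sup>*\<^sup>* (q0, w, [Z0]) (f, [], \<gamma>))"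

definition context_free :: "'x set \<Rightarrow> 'x list set \<Rightarrow> bool" where
  "context_free A L \<longleftrightarrow> finite A \<and>
     (\<exists>(trans :: 'x pda_trans) q0 Z0 fin. finite trans \<and> finite fin \<and>
        (\<forall>t \<in> trans. set_option (fst (snd t)) \<subseteq> A) \<and>
        L = {w \<in> lists A. pda_accepts trans q0 Z0 fin w})"

definition word_eval :: "('g, 'b) monoid_scheme \<Rightarrow> ('x \<Rightarrow> 'g) \<Rightarrow> 'x list \<Rightarrow> 'g" where
  "word_eval G f w = foldr (\<lambda>x acc. f x \<otimes>\<^bsub>G\<^esub> acc) w \<one>\<^bsub>G\<^esub>"

definition finite_generating_set :: "('g, 'b) monoid_scheme \<Rightarrow> 'x set \<Rightarrow> ('x \<Rightarrow> 'g) \<Rightarrow> bool" where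
  "finite_generating_set G A f \<longleftrightarrow> finite A \<and> f ` A \<subseteq> carrier G \<and>
     (\<forall>g \<in> carrier G. \<exists>w \<in> lists A. word_eval G f w = g)"

definition finitely_generated :: "('g, 'b) monoid_scheme \<Rightarrow> bool" where
  "finitely_generated G \<longleftrightarrow> (\<exists>(A :: nat set) f. finite_generating_set G A f)"

definition left_order :: "('g, 'b) monoid_scheme \<Rightarrow> ('g \<Rightarrow> 'g \<Rightarrow> bool) \<Rightarrow> bool" where
  "left_order G lt \<longleftrightarrow>
     (\<forall>a \<in> carrier G. \<not> lt a a) \<and>
     (\<forall>a \<in> carrier G. \<forall>b \<in> carrier G. \<forall>c \<in> carrier G. lt a b \<and> lt b c \<longrightarrow> lt a c) \<and>
     (\<forall>a \<in> carrier G. \<forall>b \<in> carrier G. a \<noteq> b \<longrightarrow> lt a b \<or> lt b a) \<and>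
     (\<forall>g \<in> carrier G. \<forall>a \<in> carrier G. \<forall>b \<in> carrier G.
         lt a b \<longrightarrow> lt (g \<otimes>\<^bsub>G\<^esub> a) (g \<otimes>\<^bsub>G\<^esub> b))"

definition positive_cone :: "('g, 'b) monoid_scheme \<Rightarrow> ('g \<Rightarrow> 'g \<Rightarrow> bool) \<Rightarrow> 'g set" where
  "positive_cone G lt = {g \<in> carrier G. lt \<one>\<^bsub>G\<^esub> g}"

definition cf_preimage_left_order :: "('g, 'b) monoid_scheme \<Rightarrow> ('g \<Rightarrow> 'g \<Rightarrow> bool) \<Rightarrow> bool" where
  "cf_preimage_left_order G lt \<longleftrightarrow> left_order G lt \<and>
     (\<exists>(A :: nat set) f. finite_generating_set G A f \<and>
        context_free A {w \<in> lists A. word_eval G f w \<in> positive_cone G lt})"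

definition Z2 :: "(int \<times> int) monoid" where
  "Z2 = \<lparr>carrier = UNIV, monoid.mult = (\<lambda>(a, b) (c, d). (a + c, b + d)), monoid.one = (0, 0)\<rparr>"

end

theory Submission
  imports Defs "HOL-Library.Sublist" "HOL-Library.Nat_Bijection" "HOL-Library.Product_Plus"
begin

definition olist :: "'x option \<Rightarrow> 'x list" where
  "olist a = (case a of None \<Rightarrow> [] | Some x \<Rightarrow> [x])"

lemma olist_simps[simp]: "olist None = []" "olist (Some x) = [x]"
  by (simp_all add: olist_def)

lemma length_olist: "length (olist a) \<le> 1"
  by (cases a) auto

lemma step_gen:
  assumes "(q, a, Z, q', \<beta>) \<in> \<delta>"
  shows "pda_step \<delta> (q, olist a @ w, Z # rest) (q', w, \<beta> @ rest)"
proof (cases a)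
  case None then show ?thesis using assms unfolding pda_step_def by fastforce
next
  case (Some x) then show ?thesis using assms unfolding pda_step_def by fastforce
qed

lemma step_eps:
  "(q, None, Z, q', \<beta>) \<in> \<delta> \<Longrightarrow> pda_step \<delta> (q, w, Z # rest) (q', w, \<beta> @ rest)"
  using step_gen[of q None Z q' \<beta> \<delta> w rest] by simp

lemma step_read:
  "(q, Some x, Z, q', \<beta>) \<in> \<delta> \<Longrightarrow> pda_step \<delta> (q, x # w, Z # rest) (q', w, \<beta> @ rest)"
  using step_gen[of q "Some x" Z q' \<beta> \<delta> w rest] by simp

lemma step_cases:
  assumes "pda_step \<delta> (q, w, st) c'"
  shows "\<exists>Z rest a q' \<beta> w'. st = Z # rest \<and> (q, a, Z, q', \<beta>) \<in> \<delta> \<and> w = olist a @ w'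
           \<and> c' = (q', w', \<beta> @ rest)"
proof -
  obtain Z rest a q' \<beta> w'' where h: "st = Z#rest" "(q,a,Z,q',\<beta>)\<in>\<delta>" "c' = (q', w'', \<beta>@rest)"
     "(a = None \<and> w'' = w) \<or> (\<exists>x. a = Some x \<and> w = x # w'')"
    using assms unfolding pda_step_def by blast
  then show ?thesis
    by (intro exI[of _ Z] exI[of _ rest] exI[of _ a] exI[of _ q'] exI[of _ \<beta>] exI[of _ w'']) auto
qed

inductive gen :: "'x pda_trans \<Rightarrow> nat set \<Rightarrow> nat \<Rightarrow> nat list \<Rightarrow> nat option \<Rightarrow> 'x list \<Rightarrow> bool"
  for \<delta> F where
  g_nil: "gen \<delta> F p [] (Some p) []"
| g_fin: "p \<in> F \<Longrightarrow> gen \<delta> F p \<gamma> None []"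
| g_cons: "(p, a, Z, q1, \<beta>) \<in> \<delta> \<Longrightarrow> gen \<delta> F q1 \<beta> (Some q') w1 \<Longrightarrow> gen \<delta> F q' \<gamma> qo w2
           \<Longrightarrow> gen \<delta> F p (Z # \<gamma>) qo (olist a @ w1 @ w2)"
| g_push: "(p, a, Z, q1, \<beta>) \<in> \<delta> \<Longrightarrow> gen \<delta> F q1 \<beta> None w
           \<Longrightarrow> gen \<delta> F p (Z # \<gamma>) None (olist a @ w)"

lemma gen_run:
  "gen \<delta> F p \<gamma> qo w \<Longrightarrow>
    (\<forall>q r st. qo = Some q \<longrightarrow> (pda_step \<delta>)\<^sup>*\<^sup>* (p, w @ r, \<gamma> @ st) (q, r, st)) \<and>
    (\<forall>r st. qo = None \<longrightarrow> (\<exists>f \<gamma>'. f \<in> F \<and> (pda_step \<delta>)\<^sup>*\<^sup>* (p, w @ r, \<gamma> @ st) (f, r, \<gamma>')))"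
proof (induction rule: gen.induct)
  case (g_nil p)
  then show ?case by auto
next
  case (g_fin p \<gamma>)
  then show ?case by auto
next
  case (g_cons p a Z q1 \<beta> q' w1 \<gamma> qo w2)
  have s: "pda_step \<delta> (p, olist a @ (w1 @ w2 @ r), Z # \<gamma> @ st) (q1, w1 @ w2 @ r, \<beta> @ \<gamma> @ st)"
    for r st using step_gen[OF g_cons(1)] by blast
  show ?case
  proof (intro conjI allI impI)
    fix q r st assume "qo = Some q"
    have "(pda_step \<delta>)\<^sup>*\<^sup>* (q1, w1 @ (w2 @ r), \<beta> @ (\<gamma> @ st)) (q', w2 @ r, \<gamma> @ st)"
      using g_cons.IH(1) by blast
    moreover have "(pda_step \<delta>)\<^sup>*\<^sup>* (q', w2 @ r, \<gamma> @ st) (q, r, st)"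
      using g_cons.IH(2) \<open>qo = Some q\<close> by blast
    ultimately show "(pda_step \<delta>)\<^sup>*\<^sup>* (p, (olist a @ w1 @ w2) @ r, (Z # \<gamma>) @ st) (q, r, st)"
      using s[of r st] by (simp add: converse_rtranclp_into_rtranclp)
  next
    fix r st assume "qo = None"
    have c1: "(pda_step \<delta>)\<^sup>*\<^sup>* (q1, w1 @ (w2 @ r), \<beta> @ (\<gamma> @ st)) (q', w2 @ r, \<gamma> @ st)"
      using g_cons.IH(1) by blast
    obtain f \<gamma>' where "f \<in> F" and c2: "(pda_step \<delta>)\<^sup>*\<^sup>* (q', w2 @ r, \<gamma> @ st) (f, r, \<gamma>')"
      using g_cons.IH(2) \<open>qo = None\<close> by blast
    have "(pda_step \<delta>)\<^sup>*\<^sup>* (p, olist a @ w1 @ w2 @ r, Z # \<gamma> @ st) (f, r, \<gamma>')"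
      using rtranclp_trans[OF converse_rtranclp_into_rtranclp[OF s[of r st] c1] c2] .
    then show "\<exists>f \<gamma>'. f \<in> F \<and> (pda_step \<delta>)\<^sup>*\<^sup>* (p, (olist a @ w1 @ w2) @ r, (Z # \<gamma>) @ st) (f, r, \<gamma>')"
      using \<open>f \<in> F\<close> by auto
  qed
next
  case (g_push p a Z q1 \<beta> w \<gamma>)
  show ?case
  proof (intro conjI allI impI)
    fix r st
    obtain f \<gamma>' where "f \<in> F" "(pda_step \<delta>)\<^sup>*\<^sup>* (q1, w @ r, \<beta> @ (\<gamma> @ st)) (f, r, \<gamma>')"
      using g_push.IH by blast
    moreover have "pda_step \<delta> (p, olist a @ (w @ r), Z # \<gamma> @ st) (q1, w @ r, \<beta> @ \<gamma> @ st)"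
      using step_gen[OF g_push(1)] by blast
    ultimately show "\<exists>f \<gamma>'. f \<in> F \<and> (pda_step \<delta>)\<^sup>*\<^sup>* (p, (olist a @ w) @ r, (Z # \<gamma>) @ st) (f, r, \<gamma>')"
      by (metis append_assoc append_Cons converse_rtranclp_into_rtranclp)
  qed simp
qed

lemma gen_split:
  "gen \<delta> F p \<gamma>0 qo w \<Longrightarrow> qo = None \<Longrightarrow> \<gamma>0 = \<beta> @ \<gamma> \<Longrightarrow>
    gen \<delta> F p \<beta> None w \<or> (\<exists>q' w1 w2. w = w1 @ w2 \<and> gen \<delta> F p \<beta> (Some q') w1 \<and> gen \<delta> F q' \<gamma> None w2)"
proof (induction arbitrary: \<beta> rule: gen.induct)
  case g_nil then show ?case by simp
next
  case (g_fin p \<gamma>0 )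
  then show ?case by (auto intro: gen.intros)
next
  case (g_cons p a Z q1 \<beta>' q' w1 \<gamma>' qo w2)
  show ?case
  proof (cases \<beta>)
    case Nil
    then show ?thesis using g_cons.prems gen.g_nil gen.g_cons[OF g_cons.hyps(1-3)] by (metis append_Nil)
  next
    case (Cons Y \<beta>2)
    with g_cons.prems have Y: "Y = Z" "\<gamma>' = \<beta>2 @ \<gamma>" by auto
    from g_cons.IH(2)[OF g_cons.prems(1) Y(2)] show ?thesis
    proof
      assume "gen \<delta> F q' \<beta>2 None w2"
      then show ?thesis using gen.g_cons[OF g_cons.hyps(1,2)] Cons Y by auto
    next
      assume "\<exists>q'' w1' w2'. w2 = w1' @ w2' \<and> gen \<delta> F q' \<beta>2 (Some q'') w1' \<and> gen \<delta> F q'' \<gamma> None w2'"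
      then obtain q'' w1' w2' where h: "w2 = w1' @ w2'" "gen \<delta> F q' \<beta>2 (Some q'') w1'" "gen \<delta> F q'' \<gamma> None w2'"
        by blast
      have "gen \<delta> F p (Z # \<beta>2) (Some q'') (olist a @ w1 @ w1')"
        using gen.g_cons[OF g_cons.hyps(1,2) h(2)] .
      then show ?thesis using h Cons Y by (intro disjI2 exI[of _ q''] exI[of _ "olist a @ w1 @ w1'"] exI[of _ w2']) auto
    qed
  qed
next
  case (g_push p a Z q1 \<beta>' w \<gamma>')
  show ?case
  proof (cases \<beta>)
    case Nil
    then show ?thesis using g_push.prems gen.g_nil gen.g_push[OF g_push.hyps(1,2)] by fastforce
  next
    case (Cons Y \<beta>2)
    then show ?thesis using g_push.prems gen.g_push[OF g_push.hyps(1,2)] by auto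
  qed
qed

lemma run_gen:
  assumes "(pda_step \<delta>)\<^sup>*\<^sup>* c c'" "c' = (f, [], \<gamma>')" "f \<in> F"
  shows "gen \<delta> F (fst c) (snd (snd c)) None (fst (snd c))"
  using assms
proof (induction rule: converse_rtranclp_induct)
  case base
  then show ?case by (auto intro: g_fin)
next
  case (step y z)
  obtain p w st where y: "y = (p, w, st)" by (cases y) auto
  from step_cases[OF step(1)[unfolded y]] obtain Z rest a q' \<beta> w' where
    h: "st = Z # rest" "(p, a, Z, q', \<beta>) \<in> \<delta>" "w = olist a @ w'" "z = (q', w', \<beta> @ rest)" by blast
  have "gen \<delta> F q' (\<beta> @ rest) None w'" using step.IH step.prems h(4) by simp
  from gen_split[OF this refl refl] show ?case
  proof
    assume "gen \<delta> F q' \<beta> None w'"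
    then show ?thesis using g_push[OF h(2)] y h by simp
  next
    assume "\<exists>q'' w1 w2. w' = w1 @ w2 \<and> gen \<delta> F q' \<beta> (Some q'') w1 \<and> gen \<delta> F q'' rest None w2"
    then show ?thesis using g_cons[OF h(2)] y h by auto
  qed
qed

lemma accepts_iff_gen:
  "pda_accepts \<delta> q0 Z0 F w \<longleftrightarrow> gen \<delta> F q0 [Z0] None w"
proof
  assume "pda_accepts \<delta> q0 Z0 F w"
  then obtain f \<gamma> where "f \<in> F" "(pda_step \<delta>)\<^sup>*\<^sup>* (q0, w, [Z0]) (f, [], \<gamma>)"
    unfolding pda_accepts_def by blast
  from run_gen[OF this(2) refl this(1)] show "gen \<delta> F q0 [Z0] None w" by simp
next
  assume "gen \<delta> F q0 [Z0] None w"
  from gen_run[OF this] have "\<exists>f \<gamma>'. f \<in> F \<and> (pda_step \<delta>)\<^sup>*\<^sup>* (q0, w @ [], [Z0] @ []) (f, [], \<gamma>')"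
    by blast
  then show "pda_accepts \<delta> q0 Z0 F w" unfolding pda_accepts_def by simp
qed

definition Qs :: "'x pda_trans \<Rightarrow> nat \<Rightarrow> nat set" where
  "Qs \<delta> q0 = insert q0 ((\<lambda>(q,a,Z,q',\<beta>). q) ` \<delta> \<union> (\<lambda>(q,a,Z,q',\<beta>). q') ` \<delta>)"

definition Sf :: "'x pda_trans \<Rightarrow> nat \<Rightarrow> nat list set" where
  "Sf \<delta> Z0 = {[], [Z0]} \<union> (\<Union>t\<in>\<delta>. set (suffixes ((\<lambda>(q,a,Z,q',\<beta>). \<beta>) t)))"

definition Lab :: "'x pda_trans \<Rightarrow> nat \<Rightarrow> nat \<Rightarrow> (nat \<times> nat list \<times> nat option) set" where
  "Lab \<delta> q0 Z0 = Qs \<delta> q0 \<times> Sf \<delta> Z0 \<times> insert None (Some ` Qs \<delta> q0)"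

definition genL :: "'x pda_trans \<Rightarrow> nat set \<Rightarrow> (nat \<times> nat list \<times> nat option) \<Rightarrow> 'x list \<Rightarrow> bool" where
  "genL \<delta> F l w = gen \<delta> F (fst l) (fst (snd l)) (snd (snd l)) w"

definition ctx where
  "ctx \<delta> F N M u z \<longleftrightarrow> (\<forall>x. genL \<delta> F M x \<longrightarrow> genL \<delta> F N (u @ x @ z))"

lemma finite_Lab: "finite \<delta> \<Longrightarrow> finite (Lab \<delta> q0 Z0)"
  unfolding Lab_def Qs_def Sf_def by auto

lemma Qs_src: "(q,a,Z,q',\<beta>) \<in> \<delta> \<Longrightarrow> q \<in> Qs \<delta> q0"
  unfolding Qs_def by force
lemma Qs_tgt: "(q,a,Z,q',\<beta>) \<in> \<delta> \<Longrightarrow> q' \<in> Qs \<delta> q0"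
  unfolding Qs_def by force
lemma Sf_beta: "(q,a,Z,q',\<beta>) \<in> \<delta> \<Longrightarrow> \<beta> \<in> Sf \<delta> Z0"
  unfolding Sf_def by force
lemma Sf_tail: "Z # \<gamma> \<in> Sf \<delta> Z0 \<Longrightarrow> \<gamma> \<in> Sf \<delta> Z0"
proof -
  assume a: "Z # \<gamma> \<in> Sf \<delta> Z0"
  show ?thesis
  proof (cases "Z # \<gamma> = [Z0]")
    case True then show ?thesis unfolding Sf_def by auto
  next
    case False
    then obtain t where "t \<in> \<delta>" "suffix (Z # \<gamma>) ((\<lambda>(q,a,Z,q',\<beta>). \<beta>) t)"
      using a unfolding Sf_def by auto
    then show ?thesis unfolding Sf_def by (auto dest: suffix_ConsD)
  qed
qed

lemma end_state: "gen \<delta> F p \<gamma> qo w \<Longrightarrow> qo = Some q \<Longrightarrow> p \<in> Qs \<delta> q0 \<Longrightarrow> q \<in> Qs \<delta> q0"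
proof (induction arbitrary: q rule: gen.induct)
  case (g_cons p a Z q1 \<beta> q' w1 \<gamma> qo w2)
  then show ?case using Qs_tgt[OF g_cons(1)] by blast
qed auto

lemma ctx_refl: "ctx \<delta> F N N [] []"
  unfolding ctx_def by simp

lemma ctx_trans: "ctx \<delta> F N M u z \<Longrightarrow> ctx \<delta> F M K u' z' \<Longrightarrow> ctx \<delta> F N K (u @ u') (z' @ z)"
  unfolding ctx_def by (metis append.assoc)

lemma ctx_c1: "(p,a,Z,q1,\<beta>) \<in> \<delta> \<Longrightarrow> gen \<delta> F q' \<gamma> qo w2 \<Longrightarrow>
   ctx \<delta> F (p, Z # \<gamma>, qo) (q1, \<beta>, Some q') (olist a) w2"
  unfolding ctx_def genL_def using g_cons by fastforce

lemma ctx_c2: "(p,a,Z,q1,\<beta>) \<in> \<delta> \<Longrightarrow> gen \<delta> F q1 \<beta> (Some q') w1 \<Longrightarrow>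
   ctx \<delta> F (p, Z # \<gamma>, qo) (q', \<gamma>, qo) (olist a @ w1) []"
  unfolding ctx_def genL_def using g_cons by fastforce

lemma ctx_push: "(p,a,Z,q1,\<beta>) \<in> \<delta> \<Longrightarrow>
   ctx \<delta> F (p, Z # \<gamma>, None) (q1, \<beta>, None) (olist a) []"
  unfolding ctx_def genL_def using g_push by fastforce

lemma ctx_pow: "ctx \<delta> F M M v y \<Longrightarrow> ctx \<delta> F M M (concat (replicate i v)) (concat (replicate i y))"
proof (induction i)
  case 0 then show ?case by (simp add: ctx_refl)
next
  case (Suc i)
  have "ctx \<delta> F M M (v @ concat (replicate i v)) (concat (replicate i y) @ y)"
    using ctx_trans[OF Suc.prems Suc.IH[OF Suc.prems]] .
  moreover have "concat (replicate i y) @ y = y @ concat (replicate i y)"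
    by (induction i) auto
  ultimately show ?case by simp
qed

lemma arith3: "0 < (k::nat) \<Longrightarrow> 3^k < (x::nat) \<Longrightarrow> x \<le> 1 + 2*m \<Longrightarrow> 3^(k-1) < m"
proof -
  assume "0 < k" "3^k < x" "x \<le> 1 + 2*m"
  then have "(3::nat)^k = 3 * 3^(k-1)" by (cases k) auto
  moreover have "(1::nat) \<le> 3^(k-1)" by simp
  ultimately show ?thesis using \<open>3^k < x\<close> \<open>x \<le> 1 + 2*m\<close> by linarith
qed

definition REC where
  "REC \<delta> F R V N u z \<longleftrightarrow> (\<forall>M\<in>V. \<exists>u' v y z'. ctx \<delta> F R M u' z' \<and> ctx \<delta> F M N v y \<and> v @ y \<noteq> []
      \<and> u = u' @ v \<and> z = y @ z')"

definition PUMP where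
  "PUMP \<delta> F R W \<longleftrightarrow> (\<exists>M u' v x' y z'. W = u' @ v @ x' @ y @ z' \<and> ctx \<delta> F R M u' z' \<and>
      ctx \<delta> F M M v y \<and> genL \<delta> F M x' \<and> v @ y \<noteq> [])"

lemma found: "N \<in> V \<Longrightarrow> REC \<delta> F R V N u z \<Longrightarrow> genL \<delta> F N x \<Longrightarrow> PUMP \<delta> F R (u @ x @ z)"
  unfolding REC_def PUMP_def by fastforce

lemma desc_step:
  assumes fin: "finite (Lab \<delta> q0 Z0)" and NV: "N \<notin> V" and NL: "N \<in> Lab \<delta> q0 Z0" and VL: "V \<subseteq> Lab \<delta> q0 Z0"
    and cR: "ctx \<delta> F R N u z" and cN: "ctx \<delta> F N c \<alpha> \<zeta>" and rec: "REC \<delta> F R V N u z"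
    and cL: "c \<in> Lab \<delta> q0 Z0"
    and l1: "\<alpha> @ \<zeta> = [] \<Longrightarrow> 3^(card (Lab \<delta> q0 Z0) - card V) < length xc"
    and l2: "\<alpha> @ \<zeta> \<noteq> [] \<Longrightarrow> 3^(card (Lab \<delta> q0 Z0) - card V - 1) < length xc"
    and IH: "\<And>V u z. c \<in> Lab \<delta> q0 Z0 \<Longrightarrow> V \<subseteq> Lab \<delta> q0 Z0 \<Longrightarrow> ctx \<delta> F R c u z \<Longrightarrow>
              3^(card (Lab \<delta> q0 Z0) - card V) < length xc \<Longrightarrow> REC \<delta> F R V c u z \<Longrightarrow> PUMP \<delta> F R (u @ xc @ z)"
  shows "PUMP \<delta> F R ((u @ \<alpha>) @ xc @ (\<zeta> @ z))"
proof -
  define V' where "V' = (if \<alpha> @ \<zeta> = [] then V else insert N V)"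
  have "V' \<subseteq> Lab \<delta> q0 Z0" using VL NL V'_def by auto
  moreover have "ctx \<delta> F R c (u @ \<alpha>) (\<zeta> @ z)" using ctx_trans[OF cR cN] .
  moreover have "3^(card (Lab \<delta> q0 Z0) - card V') < length xc"
  proof (cases "\<alpha> @ \<zeta> = []")
    case True then show ?thesis using l1 V'_def by simp
  next
    case False
    have "finite V" using VL fin finite_subset by blast
    then have "card V' = Suc (card V)" using NV False V'_def by simp
    then show ?thesis using l2 False by simp
  qed
  moreover have "REC \<delta> F R V' c (u @ \<alpha>) (\<zeta> @ z)"
    unfolding REC_def
  proof
    fix M assume "M \<in> V'"
    show "\<exists>u' v y z'. ctx \<delta> F R M u' z' \<and> ctx \<delta> F M c v y \<and> v @ y \<noteq> [] \<and> u @ \<alpha> = u' @ v \<and> \<zeta> @ z = y @ z'"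
    proof (cases "M \<in> V")
      case True
      then obtain u' v y z' where h: "ctx \<delta> F R M u' z'" "ctx \<delta> F M N v y" "v @ y \<noteq> []" "u = u' @ v" "z = y @ z'"
        using rec unfolding REC_def by blast
      show ?thesis
        using h ctx_trans[OF h(2) cN] by (intro exI[of _ u'] exI[of _ "v @ \<alpha>"] exI[of _ "\<zeta> @ y"] exI[of _ z']) auto
    next
      case False
      then have "M = N" "\<alpha> @ \<zeta> \<noteq> []" using \<open>M \<in> V'\<close> V'_def by (auto split: if_splits)
      then show ?thesis using cR cN by (intro exI[of _ u] exI[of _ \<alpha>] exI[of _ \<zeta>] exI[of _ z]) auto
    qed
  qed
  ultimately show ?thesis using IH cL by blast
qed

lemma card_lt: "finite L \<Longrightarrow> N \<in> L \<Longrightarrow> N \<notin> V \<Longrightarrow> V \<subseteq> L \<Longrightarrow> card V < card L"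
  by (metis psubsetI psubset_card_mono)

lemma desc:
  assumes fin: "finite (Lab \<delta> q0 Z0)"
  shows "gen \<delta> F p \<gamma> qo x \<Longrightarrow> (p,\<gamma>,qo) \<in> Lab \<delta> q0 Z0 \<Longrightarrow> V \<subseteq> Lab \<delta> q0 Z0 \<Longrightarrow>
    ctx \<delta> F R (p,\<gamma>,qo) u z \<Longrightarrow> 3^(card (Lab \<delta> q0 Z0) - card V) < length x \<Longrightarrow>
    REC \<delta> F R V (p,\<gamma>,qo) u z \<Longrightarrow> PUMP \<delta> F R (u @ x @ z)"
proof (induction arbitrary: V u z rule: gen.induct)
  case (g_nil p)
  then show ?case by simp
next
  case (g_fin p \<gamma>)
  then show ?case by simp
next
  case (g_cons p a Z q1 \<beta> q' w1 \<gamma> qo w2)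
  let ?N = "(p, Z # \<gamma>, qo)"
  let ?n = "card (Lab \<delta> q0 Z0)"
  show ?case
  proof (cases "?N \<in> V")
    case True
    have "genL \<delta> F ?N (olist a @ w1 @ w2)" using gen.g_cons[OF g_cons.hyps] unfolding genL_def by simp
    then show ?thesis using found[OF True g_cons.prems(5)] by blast
  next
    case False
    have kpos: "0 < ?n - card V" using card_lt[OF fin g_cons.prems(1) False g_cons.prems(2)] by simp
    have NL: "p \<in> Qs \<delta> q0" "Z # \<gamma> \<in> Sf \<delta> Z0" "qo \<in> insert None (Some ` Qs \<delta> q0)"
      using g_cons.prems(1) unfolding Lab_def by auto
    have q1: "q1 \<in> Qs \<delta> q0" using Qs_tgt[OF g_cons.hyps(1)] .
    have q': "q' \<in> Qs \<delta> q0" using end_state[OF g_cons.hyps(2) refl q1] .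
    have lx: "length (olist a @ w1 @ w2) \<le> 1 + length w1 + length w2" using length_olist[of a] by simp
    show ?thesis
    proof (cases "length w2 \<le> length w1")
      case True
      have cL: "(q1, \<beta>, Some q') \<in> Lab \<delta> q0 Z0" unfolding Lab_def using q1 q' Sf_beta[OF g_cons.hyps(1)] by auto
      have "PUMP \<delta> F R ((u @ olist a) @ w1 @ (w2 @ z))"
      proof (rule desc_step[OF fin False g_cons.prems(1,2,3) ctx_c1[OF g_cons.hyps(1,3)] g_cons.prems(5) cL])
        show "olist a @ w2 = [] \<Longrightarrow> 3 ^ (?n - card V) < length w1"
          using g_cons.prems(4) by simp
        show "olist a @ w2 \<noteq> [] \<Longrightarrow> 3 ^ (?n - card V - 1) < length w1"
          using arith3[OF kpos g_cons.prems(4)] lx True by simp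
      qed (fact g_cons.IH(1))
      then show ?thesis by simp
    next
      case False2: False
      have cL: "(q', \<gamma>, qo) \<in> Lab \<delta> q0 Z0" unfolding Lab_def using q' NL Sf_tail by auto
      have "PUMP \<delta> F R ((u @ (olist a @ w1)) @ w2 @ ([] @ z))"
      proof (rule desc_step[OF fin False g_cons.prems(1,2,3) ctx_c2[OF g_cons.hyps(1,2)] g_cons.prems(5) cL])
        show "(olist a @ w1) @ [] = [] \<Longrightarrow> 3 ^ (?n - card V) < length w2"
          using g_cons.prems(4) by simp
        show "(olist a @ w1) @ [] \<noteq> [] \<Longrightarrow> 3 ^ (?n - card V - 1) < length w2"
          using arith3[OF kpos g_cons.prems(4)] lx False2 by simp
      qed (fact g_cons.IH(2))
      then show ?thesis by simp
    qed
  qed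
next
  case (g_push p a Z q1 \<beta> w \<gamma>)
  let ?N = "(p, Z # \<gamma>, None)"
  let ?n = "card (Lab \<delta> q0 Z0)"
  show ?case
  proof (cases "?N \<in> V")
    case True
    have "genL \<delta> F ?N (olist a @ w)" using gen.g_push[OF g_push.hyps] unfolding genL_def by simp
    then show ?thesis using found[OF True g_push.prems(5)] by blast
  next
    case False
    have kpos: "0 < ?n - card V" using card_lt[OF fin g_push.prems(1) False g_push.prems(2)] by simp
    have q1: "q1 \<in> Qs \<delta> q0" using Qs_tgt[OF g_push.hyps(1)] .
    have lx: "length (olist a @ w) \<le> 1 + 2 * length w" using length_olist[of a] by simp
    have cL: "(q1, \<beta>, None) \<in> Lab \<delta> q0 Z0" unfolding Lab_def using q1 Sf_beta[OF g_push.hyps(1)] by auto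
    have "PUMP \<delta> F R ((u @ olist a) @ w @ ([] @ z))"
    proof (rule desc_step[OF fin False g_push.prems(1,2,3) ctx_push[OF g_push.hyps(1)] g_push.prems(5) cL])
      show "olist a @ [] = [] \<Longrightarrow> 3 ^ (?n - card V) < length w"
        using g_push.prems(4) by simp
      show "olist a @ [] \<noteq> [] \<Longrightarrow> 3 ^ (?n - card V - 1) < length w"
        using arith3[OF kpos g_push.prems(4) lx] by simp
    qed (fact g_push.IH)
    then show ?thesis by simp
  qed
qed


lemma stage1:
  assumes fin: "finite (Lab \<delta> q0 Z0)"
  shows "gen \<delta> F p \<gamma> qo x \<Longrightarrow> (p,\<gamma>,qo) \<in> Lab \<delta> q0 Z0 \<Longrightarrow> 3^n < length x \<Longrightarrow>
    \<exists>M u x' z. M \<in> Lab \<delta> q0 Z0 \<and> ctx \<delta> F (p,\<gamma>,qo) M u z \<and> x = u @ x' @ z \<and> genL \<delta> F M x' \<and>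
      3^n < length x' \<and> length x' \<le> 3^(Suc n)"
proof (induction rule: gen.induct)
  case (g_nil p)
  then show ?case by simp
next
  case (g_fin p \<gamma>)
  then show ?case by simp
next
  case (g_cons p a Z q1 \<beta> q' w1 \<gamma> qo w2)
  let ?N = "(p, Z # \<gamma>, qo)"
  let ?x = "olist a @ w1 @ w2"
  show ?case
  proof (cases "length ?x \<le> 3^(Suc n)")
    case True
    have "genL \<delta> F ?N ?x" using gen.g_cons[OF g_cons.hyps] unfolding genL_def by simp
    moreover have "?x = [] @ ?x @ []" by simp
    ultimately show ?thesis using True g_cons.prems(1,2) ctx_refl[of \<delta> F ?N] by blast
  next
    case False
    have NL: "p \<in> Qs \<delta> q0" "Z # \<gamma> \<in> Sf \<delta> Z0" "qo \<in> insert None (Some ` Qs \<delta> q0)"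
      using g_cons.prems(1) unfolding Lab_def by auto
    have q1: "q1 \<in> Qs \<delta> q0" using Qs_tgt[OF g_cons.hyps(1)] .
    have q': "q' \<in> Qs \<delta> q0" using end_state[OF g_cons.hyps(2) refl q1] .
    have lx: "length (olist a @ w1 @ w2) \<le> 1 + length w1 + length w2" using length_olist[of a] by simp
    show ?thesis
    proof (cases "length w2 \<le> length w1")
      case True
      have cL: "(q1, \<beta>, Some q') \<in> Lab \<delta> q0 Z0" unfolding Lab_def using q1 q' Sf_beta[OF g_cons.hyps(1)] by auto
      have "3^n < length w1" using arith3[of "Suc n" "length ?x" "length w1"] False lx True by simp
      then obtain M u x' z where h: "M \<in> Lab \<delta> q0 Z0" "ctx \<delta> F (q1, \<beta>, Some q') M u z" "w1 = u @ x' @ z"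
          "genL \<delta> F M x'" "3^n < length x'" "length x' \<le> 3^(Suc n)"
        using g_cons.IH(1)[OF cL] by blast
      have e: "?x = (olist a @ u) @ x' @ (z @ w2)" using h(3) by simp
      show ?thesis using h(1,4,5,6) ctx_trans[OF ctx_c1[OF g_cons.hyps(1,3)] h(2)] e by blast
    next
      case False2: False
      have cL: "(q', \<gamma>, qo) \<in> Lab \<delta> q0 Z0" unfolding Lab_def using q' NL Sf_tail by auto
      have "3^n < length w2" using arith3[of "Suc n" "length ?x" "length w2"] False lx False2 by simp
      then obtain M u x' z where h: "M \<in> Lab \<delta> q0 Z0" "ctx \<delta> F (q', \<gamma>, qo) M u z" "w2 = u @ x' @ z"
          "genL \<delta> F M x'" "3^n < length x'" "length x' \<le> 3^(Suc n)"
        using g_cons.IH(2)[OF cL] by blast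
      have e: "?x = ((olist a @ w1) @ u) @ x' @ (z @ [])" using h(3) by simp
      show ?thesis using h(1,4,5,6) ctx_trans[OF ctx_c2[OF g_cons.hyps(1,2)] h(2)] e by blast
    qed
  qed
next
  case (g_push p a Z q1 \<beta> w \<gamma>)
  let ?N = "(p, Z # \<gamma>, None)"
  let ?x = "olist a @ w"
  show ?case
  proof (cases "length ?x \<le> 3^(Suc n)")
    case True
    have "genL \<delta> F ?N ?x" using gen.g_push[OF g_push.hyps] unfolding genL_def by simp
    moreover have "?x = [] @ ?x @ []" by simp
    ultimately show ?thesis using True g_push.prems(1,2) ctx_refl[of \<delta> F ?N] by blast
  next
    case False
    have q1: "q1 \<in> Qs \<delta> q0" using Qs_tgt[OF g_push.hyps(1)] .
    have lx: "length (olist a @ w) \<le> 1 + 2 * length w" using length_olist[of a] by simp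
    have cL: "(q1, \<beta>, None) \<in> Lab \<delta> q0 Z0" unfolding Lab_def using q1 Sf_beta[OF g_push.hyps(1)] by auto
    have "3^n < length w" using arith3[of "Suc n" "length ?x" "length w"] False lx by simp
    then obtain M u x' z where h: "M \<in> Lab \<delta> q0 Z0" "ctx \<delta> F (q1, \<beta>, None) M u z" "w = u @ x' @ z"
        "genL \<delta> F M x'" "3^n < length x'" "length x' \<le> 3^(Suc n)"
      using g_push.IH[OF cL] by blast
    have e: "?x = (olist a @ u) @ x' @ (z @ [])" using h(3) by simp
    show ?thesis using h(1,4,5,6) ctx_trans[OF ctx_push[OF g_push.hyps(1)] h(2)] e by blast
  qed
qed

lemma pump_gen:
  assumes fin: "finite \<delta>"
  shows "\<exists>K. \<forall>w. gen \<delta> F q0 [Z0] None w \<longrightarrow> K < length w \<longrightarrow>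
     (\<exists>u v x y z. w = u @ v @ x @ y @ z \<and> v @ y \<noteq> [] \<and> length (v @ x @ y) \<le> K \<and>
        (\<forall>i. gen \<delta> F q0 [Z0] None (u @ concat (replicate i v) @ x @ concat (replicate i y) @ z)))"
proof -
  let ?L = "Lab \<delta> q0 Z0"
  let ?n = "card ?L"
  have finL: "finite ?L" using finite_Lab[OF fin] .
  have root: "(q0, [Z0], None) \<in> ?L" unfolding Lab_def Qs_def Sf_def by auto
  show ?thesis
  proof (intro exI[of _ "3^(Suc ?n)"] allI impI)
    fix w assume g: "gen \<delta> F q0 [Z0] None w" and lw: "3^(Suc ?n) < length w"
    have "(3::nat)^?n \<le> 3^(Suc ?n)" by simp
    then have "3^?n < length w" using lw by linarith
    from stage1[OF finL g root this] obtain M u0 x' z0 where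
      h: "M \<in> ?L" "ctx \<delta> F (q0, [Z0], None) M u0 z0" "w = u0 @ x' @ z0" "genL \<delta> F M x'"
        "3^?n < length x'" "length x' \<le> 3^(Suc ?n)" by blast
    obtain p \<gamma> qo where M: "M = (p, \<gamma>, qo)" by (cases M) auto
    have g': "gen \<delta> F p \<gamma> qo x'" using h(4) M unfolding genL_def by simp
    have "PUMP \<delta> F M ([] @ x' @ [])"
    proof (rule desc[OF finL g'])
      show "(p, \<gamma>, qo) \<in> Lab \<delta> q0 Z0" using h(1) M by simp
      show "ctx \<delta> F M (p, \<gamma>, qo) [] []" using M ctx_refl by simp
      show "3 ^ (?n - card {}) < length x'" using h(5) by simp
      show "REC \<delta> F M {} (p, \<gamma>, qo) [] []" unfolding REC_def by simp
    qed simp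
    then obtain M' u' v x y z' where p: "x' = u' @ v @ x @ y @ z'" "ctx \<delta> F M M' u' z'"
      "ctx \<delta> F M' M' v y" "genL \<delta> F M' x" "v @ y \<noteq> []"
      unfolding PUMP_def by auto
    have c: "ctx \<delta> F (q0, [Z0], None) M' (u0 @ u') (z' @ z0)" using ctx_trans[OF h(2) p(2)] .
    have e1: "w = (u0 @ u') @ v @ x @ y @ z' @ z0" using h(3) p(1) by simp
    have e2: "length (v @ x @ y) \<le> 3 ^ Suc ?n" using h(6) p(1) by simp
    have e3: "\<forall>i. gen \<delta> F q0 [Z0] None ((u0 @ u') @ concat (replicate i v) @ x @ concat (replicate i y) @ z' @ z0)"
    proof
      fix i
      have "genL \<delta> F M' (concat (replicate i v) @ x @ concat (replicate i y))"
        using ctx_pow[OF p(3), of i] p(4) unfolding ctx_def by simp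
      then have "genL \<delta> F (q0, [Z0], None) ((u0 @ u') @ (concat (replicate i v) @ x @ concat (replicate i y)) @ z' @ z0)"
        using c unfolding ctx_def by blast
      then show "gen \<delta> F q0 [Z0] None ((u0 @ u') @ concat (replicate i v) @ x @ concat (replicate i y) @ z' @ z0)"
        unfolding genL_def by simp
    qed
    show "\<exists>u v x y z. w = u @ v @ x @ y @ z \<and> v @ y \<noteq> [] \<and> length (v @ x @ y) \<le> 3^(Suc ?n) \<and>
        (\<forall>i. gen \<delta> F q0 [Z0] None (u @ concat (replicate i v) @ x @ concat (replicate i y) @ z))"
      using e1 e2 e3 p(5) by blast
  qed
qed

lemma set_concat_rep: "set (concat (replicate i v)) \<subseteq> set v"
  by (induction i) auto

lemma pump_cf:
  assumes "context_free A L"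
  shows "\<exists>K. \<forall>w\<in>L. K < length w \<longrightarrow>
     (\<exists>u v x y z. w = u @ v @ x @ y @ z \<and> v @ y \<noteq> [] \<and> length (v @ x @ y) \<le> K \<and>
        (\<forall>i. u @ concat (replicate i v) @ x @ concat (replicate i y) @ z \<in> L))"
proof -
  obtain \<delta> q0 Z0 F where d: "finite \<delta>" "L = {w \<in> lists A. pda_accepts \<delta> q0 Z0 F w}"
    using assms unfolding context_free_def by blast
  obtain K where K: "\<forall>w. gen \<delta> F q0 [Z0] None w \<longrightarrow> K < length w \<longrightarrow>
     (\<exists>u v x y z. w = u @ v @ x @ y @ z \<and> v @ y \<noteq> [] \<and> length (v @ x @ y) \<le> K \<and>
        (\<forall>i. gen \<delta> F q0 [Z0] None (u @ concat (replicate i v) @ x @ concat (replicate i y) @ z)))"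
    using pump_gen[OF d(1), of F q0 Z0] by (elim exE) (rule that)
  show ?thesis
  proof (intro exI[of _ K] ballI impI)
    fix w assume w: "w \<in> L" "K < length w"
    then have a: "w \<in> lists A \<and> pda_accepts \<delta> q0 Z0 F w" using d(2) by simp
    then have gw: "gen \<delta> F q0 [Z0] None w" "w \<in> lists A" by (simp_all add: accepts_iff_gen)
    obtain u v x y z where h: "w = u @ v @ x @ y @ z" "v @ y \<noteq> []" "length (v @ x @ y) \<le> K"
        "\<forall>i. gen \<delta> F q0 [Z0] None (u @ concat (replicate i v) @ x @ concat (replicate i y) @ z)"
      using K[rule_format, OF gw(1) w(2)] by (elim exE conjE) (rule that)
    have "\<forall>i. u @ concat (replicate i v) @ x @ concat (replicate i y) @ z \<in> L"
    proof
      fix i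
      have "u @ concat (replicate i v) @ x @ concat (replicate i y) @ z \<in> lists A"
      proof -
        have s1: "set (u @ concat (replicate i v) @ x @ concat (replicate i y) @ z) \<subseteq> set w"
          using set_concat_rep[of i v] set_concat_rep[of i y] h(1) by auto
        have s2: "set w \<subseteq> A" using \<open>w \<in> lists A\<close> by blast
        have S: "set (u @ concat (replicate i v) @ x @ concat (replicate i y) @ z) \<subseteq> A"
          by (rule subset_trans[OF s1 s2])
        show ?thesis by (intro in_listsI ballI) (rule subsetD[OF S])
      qed
      moreover have "pda_accepts \<delta> q0 Z0 F (u @ concat (replicate i v) @ x @ concat (replicate i y) @ z)"
        using h(4) by (simp add: accepts_iff_gen)
      ultimately show "u @ concat (replicate i v) @ x @ concat (replicate i y) @ z \<in> L"
        unfolding d(2) by simp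
    qed
    then show "\<exists>u v x y z. w = u @ v @ x @ y @ z \<and> v @ y \<noteq> [] \<and> length (v @ x @ y) \<le> K \<and>
        (\<forall>i. u @ concat (replicate i v) @ x @ concat (replicate i y) @ z \<in> L)"
      using h by blast
  qed
qed

definition enc :: "nat \<Rightarrow> nat list \<Rightarrow> nat" where
  "enc q b = prod_encode (q, list_encode b)"

lemma enc_eq[simp]: "enc q b = enc q' b' \<longleftrightarrow> q = q' \<and> b = b'"
  unfolding enc_def by (simp add: list_encode_eq)

definition Bufs :: "(nat \<Rightarrow> nat list) \<Rightarrow> nat set \<Rightarrow> nat list set" where
  "Bufs h B = insert [] (\<Union>b\<in>B. set (suffixes (h b)))"

definition Gam :: "nat pda_trans \<Rightarrow> nat set" where
  "Gam \<delta> = (\<lambda>(q,a,Z,q',\<beta>). Z) ` \<delta>"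

definition Src :: "nat pda_trans \<Rightarrow> nat set" where
  "Src \<delta> = (\<lambda>(q,a,Z,q',\<beta>). q) ` \<delta>"

definition T1 :: "nat pda_trans \<Rightarrow> (nat \<Rightarrow> nat list) \<Rightarrow> nat set \<Rightarrow> nat pda_trans" where
  "T1 \<delta> h B = {(enc q [], Some b, Z, enc q (h b), [Z]) | q Z b. q \<in> Src \<delta> \<and> Z \<in> Gam \<delta> \<and> b \<in> B}"

definition T2 :: "nat pda_trans \<Rightarrow> (nat \<Rightarrow> nat list) \<Rightarrow> nat set \<Rightarrow> nat pda_trans" where
  "T2 \<delta> h B = {(enc q buf, None, Z, enc q' buf, \<beta>) | q Z q' \<beta> buf. (q, None, Z, q', \<beta>) \<in> \<delta> \<and> buf \<in> Bufs h B}"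

definition T3 :: "nat pda_trans \<Rightarrow> (nat \<Rightarrow> nat list) \<Rightarrow> nat set \<Rightarrow> nat pda_trans" where
  "T3 \<delta> h B = {(enc q (x # buf), None, Z, enc q' buf, \<beta>) | q x Z q' \<beta> buf.
      (q, Some x, Z, q', \<beta>) \<in> \<delta> \<and> x # buf \<in> Bufs h B}"

definition ih_trans where "ih_trans \<delta> h B = T1 \<delta> h B \<union> T2 \<delta> h B \<union> T3 \<delta> h B"

lemma finite_Bufs: "finite B \<Longrightarrow> finite (Bufs h B)"
  unfolding Bufs_def by auto

lemma Bufs_tail: "x # buf \<in> Bufs h B \<Longrightarrow> buf \<in> Bufs h B"
  unfolding Bufs_def by (auto dest: suffix_ConsD)

lemma Bufs_h: "b \<in> B \<Longrightarrow> h b \<in> Bufs h B"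
  unfolding Bufs_def by force

lemma finite_ih:
  assumes "finite \<delta>" "finite B"
  shows "finite (ih_trans \<delta> h B)"
proof -
  have "T1 \<delta> h B \<subseteq> (\<lambda>(q,Z,b). (enc q [], Some b, Z, enc q (h b), [Z])) ` (Src \<delta> \<times> Gam \<delta> \<times> B)"
    unfolding T1_def by force
  moreover have "finite (Src \<delta> \<times> Gam \<delta> \<times> B)" using assms unfolding Src_def Gam_def by auto
  ultimately have f1: "finite (T1 \<delta> h B)" by (meson finite_imageI finite_subset)
  have "T2 \<delta> h B \<subseteq> (\<lambda>(t,buf). case t of (q,a,Z,q',\<beta>) \<Rightarrow> (enc q buf, None, Z, enc q' buf, \<beta>)) ` (\<delta> \<times> Bufs h B)"
  proof
    fix t assume "t \<in> T2 \<delta> h B"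
    then obtain q Z q' \<beta> buf where "t = (enc q buf, None, Z, enc q' buf, \<beta>)" "(q, None, Z, q', \<beta>) \<in> \<delta>" "buf \<in> Bufs h B"
      unfolding T2_def by blast
    then show "t \<in> (\<lambda>(t,buf). case t of (q,a,Z,q',\<beta>) \<Rightarrow> (enc q buf, None, Z, enc q' buf, \<beta>)) ` (\<delta> \<times> Bufs h B)"
      by (intro image_eqI[where x = "((q, None, Z, q', \<beta>), buf)"]) auto
  qed
  then have f2: "finite (T2 \<delta> h B)" using assms finite_Bufs by (meson finite_SigmaI finite_imageI finite_subset)
  have "T3 \<delta> h B \<subseteq> (\<lambda>(t,buf). case t of (q,a,Z,q',\<beta>) \<Rightarrow> (enc q buf, None, Z, enc q' (tl buf), \<beta>)) ` (\<delta> \<times> Bufs h B)"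
  proof
    fix t assume "t \<in> T3 \<delta> h B"
    then obtain q x Z q' \<beta> buf where "t = (enc q (x # buf), None, Z, enc q' buf, \<beta>)" "(q, Some x, Z, q', \<beta>) \<in> \<delta>"
      "x # buf \<in> Bufs h B"
      unfolding T3_def by blast
    then show "t \<in> (\<lambda>(t,buf). case t of (q,a,Z,q',\<beta>) \<Rightarrow> (enc q buf, None, Z, enc q' (tl buf), \<beta>)) ` (\<delta> \<times> Bufs h B)"
      by (intro image_eqI[where x = "((q, Some x, Z, q', \<beta>), x # buf)"]) auto
  qed
  then have f3: "finite (T3 \<delta> h B)" using assms finite_Bufs by (meson finite_SigmaI finite_imageI finite_subset)
  show ?thesis unfolding ih_trans_def using f1 f2 f3 by simp
qed

lemma concat_nil_nonempty: "(\<forall>b\<in>B. h b \<noteq> []) \<Longrightarrow> ws \<in> lists B \<Longrightarrow> concat (map h ws) = [] \<Longrightarrow> ws = []"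
  by (cases ws) auto

lemma sim1:
  assumes hne: "\<forall>b\<in>B. h b \<noteq> []"
  shows "(pda_step \<delta>)\<^sup>*\<^sup>* c c' \<Longrightarrow> c' = (f, [], \<gamma>) \<Longrightarrow>
    \<forall>q w st buf ws. c = (q, w, st) \<longrightarrow> w = buf @ concat (map h ws) \<longrightarrow> buf \<in> Bufs h B \<longrightarrow> ws \<in> lists B \<longrightarrow>
      (pda_step (ih_trans \<delta> h B))\<^sup>*\<^sup>* (enc q buf, ws, st) (enc f [], [], \<gamma>)"
proof (induction rule: converse_rtranclp_induct)
  case base
  show ?case
  proof (intro allI impI)
    fix q w st buf ws
    assume h: "c' = (q, w, st)" "w = buf @ concat (map h ws)" "buf \<in> Bufs h B" "ws \<in> lists B"
    then have "buf = []" "concat (map h ws) = []" using base by auto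
    then have "ws = []" using concat_nil_nonempty[OF hne h(4)] by simp
    then show "(pda_step (ih_trans \<delta> h B))\<^sup>*\<^sup>* (enc q buf, ws, st) (enc f [], [], \<gamma>)"
      using h base \<open>buf = []\<close> by simp
  qed
next
  case (step y z)
  show ?case
  proof (intro allI impI)
    fix q w st buf ws
    assume h: "y = (q, w, st)" "w = buf @ concat (map h ws)" "buf \<in> Bufs h B" "ws \<in> lists B"
    from step_cases[OF step(1)[unfolded h(1)]] obtain Z rest a q1 \<beta> w' where
      s: "st = Z # rest" "(q, a, Z, q1, \<beta>) \<in> \<delta>" "w = olist a @ w'" "z = (q1, w', \<beta> @ rest)" by blast
    have IH: "\<And>buf ws. w' = buf @ concat (map h ws) \<Longrightarrow> buf \<in> Bufs h B \<Longrightarrow> ws \<in> lists B \<Longrightarrow>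
      (pda_step (ih_trans \<delta> h B))\<^sup>*\<^sup>* (enc q1 buf, ws, \<beta> @ rest) (enc f [], [], \<gamma>)"
      using step.IH step.prems s(4) by blast
    show "(pda_step (ih_trans \<delta> h B))\<^sup>*\<^sup>* (enc q buf, ws, st) (enc f [], [], \<gamma>)"
    proof (cases a)
      case None
      then have "(enc q buf, None, Z, enc q1 buf, \<beta>) \<in> ih_trans \<delta> h B"
        using s(2) h(3) unfolding ih_trans_def T2_def by blast
      from step_eps[OF this] have "pda_step (ih_trans \<delta> h B) (enc q buf, ws, st) (enc q1 buf, ws, \<beta> @ rest)"
        using s(1) by simp
      moreover have "w' = buf @ concat (map h ws)" using h(2) s(3) None by simp
      ultimately show ?thesis using converse_rtranclp_into_rtranclp IH h(3,4) by metis
    next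
      case (Some x)
      then have wx: "w = x # w'" using s(3) by simp
      show ?thesis
      proof (cases buf)
        case (Cons x' buf')
        then have "x' = x" "w' = buf' @ concat (map h ws)" using wx h(2) by auto
        have "(enc q (x # buf'), None, Z, enc q1 buf', \<beta>) \<in> ih_trans \<delta> h B"
          using s(2) h(3) Cons \<open>x' = x\<close> Some unfolding ih_trans_def T3_def by blast
        from step_eps[OF this] have "pda_step (ih_trans \<delta> h B) (enc q buf, ws, st) (enc q1 buf', ws, \<beta> @ rest)"
          using s(1) Cons \<open>x' = x\<close> by simp
        moreover have "buf' \<in> Bufs h B" using Bufs_tail h(3) Cons by blast
        ultimately show ?thesis using IH[OF \<open>w' = buf' @ concat (map h ws)\<close> _ h(4)]
          by (meson converse_rtranclp_into_rtranclp)
      next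
        case Nil
        then have cw: "concat (map h ws) = x # w'" using wx h(2) by simp
        then obtain b ws' where ws: "ws = b # ws'" by (cases ws) auto
        have bB: "b \<in> B" "ws' \<in> lists B" using h(4) ws by auto
        obtain hb' where hb: "h b = x # hb'" "w' = hb' @ concat (map h ws')"
          using cw ws hne bB(1) by (cases "h b") auto
        have t1: "(enc q [], Some b, Z, enc q (h b), [Z]) \<in> ih_trans \<delta> h B"
          unfolding ih_trans_def T1_def Src_def Gam_def using s(2) bB(1) by force
        have s1: "pda_step (ih_trans \<delta> h B) (enc q buf, ws, st) (enc q (h b), ws', Z # rest)"
          using step_read[OF t1, of ws' rest] Nil ws s(1) by simp
        have "x # hb' \<in> Bufs h B" using Bufs_h[OF bB(1), of h] hb(1) by simp
        then have t3: "(enc q (x # hb'), None, Z, enc q1 hb', \<beta>) \<in> ih_trans \<delta> h B"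
          using s(2) Some unfolding ih_trans_def T3_def by blast
        have s2: "pda_step (ih_trans \<delta> h B) (enc q (h b), ws', Z # rest) (enc q1 hb', ws', \<beta> @ rest)"
          using step_eps[OF t3] hb(1) by simp
        have "hb' \<in> Bufs h B" using Bufs_tail \<open>x # hb' \<in> Bufs h B\<close> by blast
        then have "(pda_step (ih_trans \<delta> h B))\<^sup>*\<^sup>* (enc q1 hb', ws', \<beta> @ rest) (enc f [], [], \<gamma>)"
          using IH hb(2) bB(2) by blast
        then show ?thesis using s1 s2 by (meson converse_rtranclp_into_rtranclp)
      qed
    qed
  qed
qed

lemma sim2:
  shows "(pda_step (ih_trans \<delta> h B))\<^sup>*\<^sup>* c c' \<Longrightarrow> c' = (enc f [], [], \<gamma>) \<Longrightarrow>
    \<forall>q buf ws st. c = (enc q buf, ws, st) \<longrightarrow> (pda_step \<delta>)\<^sup>*\<^sup>* (q, buf @ concat (map h ws), st) (f, [], \<gamma>)"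
proof (induction rule: converse_rtranclp_induct)
  case base
  then show ?case by auto
next
  case (step y z)
  show ?case
  proof (intro allI impI)
    fix q buf ws st
    assume h: "y = (enc q buf, ws, st)"
    from step_cases[OF step(1)[unfolded h]] obtain Z rest a p1 \<beta> ws' where
      s: "st = Z # rest" "(enc q buf, a, Z, p1, \<beta>) \<in> ih_trans \<delta> h B" "ws = olist a @ ws'" "z = (p1, ws', \<beta> @ rest)"
      by blast
    have IH: "\<And>q' buf'. p1 = enc q' buf' \<Longrightarrow> (pda_step \<delta>)\<^sup>*\<^sup>* (q', buf' @ concat (map h ws'), \<beta> @ rest) (f, [], \<gamma>)"
      using step.IH step.prems s(4) by blast
    from s(2) consider (t1) "(enc q buf, a, Z, p1, \<beta>) \<in> T1 \<delta> h B" | (t2) "(enc q buf, a, Z, p1, \<beta>) \<in> T2 \<delta> h B"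
      | (t3) "(enc q buf, a, Z, p1, \<beta>) \<in> T3 \<delta> h B" unfolding ih_trans_def by blast
    then show "(pda_step \<delta>)\<^sup>*\<^sup>* (q, buf @ concat (map h ws), st) (f, [], \<gamma>)"
    proof cases
      case t1
      then obtain b where "buf = []" "a = Some b" "p1 = enc q (h b)" "\<beta> = [Z]"
        unfolding T1_def by auto
      then show ?thesis using IH[of q "h b"] s(1,3) by simp
    next
      case t2
      then obtain q1 where "a = None" "p1 = enc q1 buf" "(q, None, Z, q1, \<beta>) \<in> \<delta>"
        unfolding T2_def by auto
      then show ?thesis using IH[of q1 buf] s(1,3) step_eps[of q Z q1 \<beta> \<delta> "buf @ concat (map h ws)" rest]
        by (simp add: converse_rtranclp_into_rtranclp)
    next
      case t3
      then obtain q1 x buf' where "buf = x # buf'" "a = None" "p1 = enc q1 buf'" "(q, Some x, Z, q1, \<beta>) \<in> \<delta>"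
        unfolding T3_def by auto
      then show ?thesis using IH[of q1 buf'] s(1,3) step_read[of q x Z q1 \<beta> \<delta> "buf' @ concat (map h ws)" rest]
        by (simp add: converse_rtranclp_into_rtranclp)
    qed
  qed
qed

lemma invhom_cf:
  assumes cf: "context_free (A :: nat set) L" and finB: "finite B" and hB: "\<forall>b\<in>B. h b \<in> lists A \<and> h b \<noteq> []"
  shows "context_free (B :: nat set) {c \<in> lists B. concat (map h c) \<in> L}"
proof -
  obtain \<delta> q0 Z0 F where d: "finite \<delta>" "finite F" "\<forall>t\<in>\<delta>. set_option (fst (snd t)) \<subseteq> A"
      "L = {w \<in> lists A. pda_accepts \<delta> q0 Z0 F w}"
    using cf unfolding context_free_def by blast
  let ?d = "ih_trans \<delta> h B"
  let ?F = "(\<lambda>f. enc f []) ` F"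
  have hne: "\<forall>b\<in>B. h b \<noteq> []" using hB by blast
  have letters: "\<forall>t\<in>?d. set_option (fst (snd t)) \<subseteq> B"
    unfolding ih_trans_def T1_def T2_def T3_def by auto
  have eq: "{c \<in> lists B. concat (map h c) \<in> L} = {c \<in> lists B. pda_accepts ?d (enc q0 []) Z0 ?F c}"
  proof (intro Collect_cong conj_cong refl)
    fix c assume cB: "c \<in> lists B"
    have cA: "concat (map h c) \<in> lists A" using cB hB by (induction c) auto
    show "concat (map h c) \<in> L \<longleftrightarrow> pda_accepts ?d (enc q0 []) Z0 ?F c"
    proof
      assume "concat (map h c) \<in> L"
      then obtain f \<gamma> where f: "f \<in> F" "(pda_step \<delta>)\<^sup>*\<^sup>* (q0, concat (map h c), [Z0]) (f, [], \<gamma>)"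
        using d(4) unfolding pda_accepts_def by blast
      have "(pda_step ?d)\<^sup>*\<^sup>* (enc q0 [], c, [Z0]) (enc f [], [], \<gamma>)"
        using sim1[OF hne f(2) refl] cB Bufs_def by auto
      then show "pda_accepts ?d (enc q0 []) Z0 ?F c" unfolding pda_accepts_def using f(1) by blast
    next
      assume "pda_accepts ?d (enc q0 []) Z0 ?F c"
      then obtain f \<gamma> where f: "f \<in> F" "(pda_step ?d)\<^sup>*\<^sup>* (enc q0 [], c, [Z0]) (enc f [], [], \<gamma>)"
        unfolding pda_accepts_def by blast
      have "(pda_step \<delta>)\<^sup>*\<^sup>* (q0, [] @ concat (map h c), [Z0]) (f, [], \<gamma>)"
        using sim2[OF f(2) refl] by blast
      then show "concat (map h c) \<in> L" using d(4) cA f(1) unfolding pda_accepts_def by auto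
    qed
  qed
  show ?thesis
    unfolding context_free_def
    using finB finite_ih[OF d(1) finB] d(2) letters eq
    by (intro conjI exI[of _ ?d] exI[of _ "enc q0 []"] exI[of _ Z0] exI[of _ ?F]) auto
qed

definition sm :: "int \<Rightarrow> int \<times> int \<Rightarrow> int \<times> int" where
  "sm k s = (k * fst s, k * snd s)"

lemma sm_simps[simp]:
  "sm 0 s = 0" "sm 1 s = s" "sm k 0 = 0"
  "sm (k + j) s = sm k s + sm j s" "sm (- k) s = - sm k s" "sm k (- s) = - sm k s"
  "sm (k - j) s = sm k s - sm j s"
  by (auto simp: sm_def prod_eq_iff algebra_simps)

locale z2ord =
  fixes lt :: "int \<times> int \<Rightarrow> int \<times> int \<Rightarrow> bool"
  assumes irr: "\<not> lt a a"
    and tr: "lt a b \<Longrightarrow> lt b c \<Longrightarrow> lt a c"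
    and tot: "a \<noteq> b \<Longrightarrow> lt a b \<or> lt b a"
    and inv: "lt a b \<Longrightarrow> lt (c + a) (c + b)"
begin

lemma lt_sub: "lt a b \<longleftrightarrow> lt 0 (b - a)"
proof
  assume "lt a b"
  from inv[OF this, of "- a"] show "lt 0 (b - a)" by simp
next
  assume "lt 0 (b - a)"
  from inv[OF this, of a] show "lt a b" by simp
qed

lemma pos_neg: "lt 0 x \<Longrightarrow> \<not> lt 0 (- x)"
proof
  assume a: "lt 0 x" and b: "lt 0 (- x)"
  have "lt x 0" using lt_sub[of x 0] b by simp
  then show False using tr[OF a] irr by blast
qed

lemma neg_pos: "x \<noteq> 0 \<Longrightarrow> \<not> lt 0 x \<Longrightarrow> lt 0 (- x)"
proof -
  assume "x \<noteq> 0" "\<not> lt 0 x"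
  then have "lt x 0" using tot[of x 0] by blast
  then show "lt 0 (- x)" using lt_sub[of x 0] by simp
qed

lemma add_pos: "lt 0 a \<Longrightarrow> lt 0 b \<Longrightarrow> lt 0 (a + b)"
proof -
  assume a: "lt 0 a" and b: "lt 0 b"
  have "lt a (a + b)" using inv[OF b, of a] by simp
  then show ?thesis using tr[OF a] by blast
qed

lemma sm_pos_nat: "lt 0 s \<Longrightarrow> lt 0 (sm (int (Suc n)) s)"
proof (induction n)
  case 0 then show ?case by simp
next
  case (Suc n)
  have e: "sm (int (Suc (Suc n))) s = sm (int (Suc n)) s + s"
    by (simp add: sm_def prod_eq_iff algebra_simps)
  show ?case unfolding e using add_pos[OF Suc.IH[OF Suc.prems] Suc.prems] .
qed

lemma sm_pos: "lt 0 s \<Longrightarrow> 0 < k \<Longrightarrow> lt 0 (sm k s)"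
  using sm_pos_nat[of s "nat (k - 1)"] by simp

lemma lt_neg: "lt a b \<Longrightarrow> lt (- b) (- a)"
  using lt_sub[of a b] lt_sub[of "- b" "- a"] by (simp add: algebra_simps)

lemma min_ex: "finite W \<Longrightarrow> W \<noteq> {} \<Longrightarrow> \<exists>m\<in>W. \<forall>x\<in>W. m = x \<or> lt m x"
proof (induction W rule: finite_ne_induct)
  case (singleton x) then show ?case by simp
next
  case (insert x F)
  then obtain m where m: "m \<in> F" "\<forall>y\<in>F. m = y \<or> lt m y" by blast
  show ?case
  proof (cases "lt x m")
    case True
    have "\<forall>y\<in>insert x F. x = y \<or> lt x y"
    proof
      fix y assume "y \<in> insert x F"
      then have "y = x \<or> m = y \<or> lt m y" using m by blast
      then show "x = y \<or> lt x y" using True tr[OF True] by blast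
    qed
    then show ?thesis by blast
  next
    case False
    then have "m = x \<or> lt m x" using tot by blast
    then show ?thesis using m by blast
  qed
qed

definition LP where "LP s \<longleftrightarrow> lt 0 s \<and> (\<forall>g. lt 0 g \<longrightarrow> g = s \<or> lt s g)"

definition nrm :: "int \<times> int \<Rightarrow> int" where "nrm g = \<bar>fst g\<bar> + \<bar>snd g\<bar>"

lemma finite_ball: "finite {g :: int \<times> int. nrm g \<le> K}"
proof -
  have "{g :: int \<times> int. nrm g \<le> K} \<subseteq> {-K..K} \<times> {-K..K}"
    unfolding nrm_def by auto
  then show ?thesis by (rule finite_subset) auto
qed

lemma caseA:
  assumes noLP: "\<not> (\<exists>s. LP s)"
  shows "\<exists>g. lt 0 g \<and> K < nrm g \<and> (\<forall>d. d \<noteq> 0 \<and> nrm d \<le> K \<longrightarrow> \<not> lt 0 (g - d) \<or> \<not> lt 0 (g + d))"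
proof -
  define ab where "ab d = (if lt 0 d then d else - d)" for d
  have abpos: "d \<noteq> 0 \<Longrightarrow> lt 0 (ab d)" for d using neg_pos ab_def by auto
  have abn: "nrm (ab d) = nrm d" for d unfolding ab_def nrm_def by auto
  define D where "D = {d. d \<noteq> 0 \<and> nrm d \<le> K}"
  have p0: "lt 0 (ab (1, 0))" using abpos[of "(1,0)"] by (simp add: prod_eq_iff)
  define E where "E = insert (ab (1,0)) (ab ` D)"
  have finD: "finite D" using finite_ball[of K] unfolding D_def by (rule finite_subset[rotated]) auto
  then have "finite E" "E \<noteq> {}" unfolding E_def by auto
  then obtain mE where mE: "mE \<in> E" "\<forall>x\<in>E. mE = x \<or> lt mE x" using min_ex by blast
  have mEpos: "lt 0 mE" using mE(1) p0 abpos unfolding E_def D_def by auto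
  have "\<exists>g. lt 0 g \<and> K < nrm g \<and> (g = mE \<or> lt g mE)"
  proof (cases "K < nrm mE")
    case True then show ?thesis using mEpos by blast
  next
    case False
    define W where "W = {h. lt 0 h \<and> (h = mE \<or> lt h mE) \<and> nrm h \<le> K}"
    have "finite W" using finite_ball[of K] unfolding W_def by (rule finite_subset[rotated]) auto
    moreover have "mE \<in> W" using False mEpos unfolding W_def by simp
    then have "W \<noteq> {}" by blast
    ultimately obtain mX where mX: "mX \<in> W" "\<forall>x\<in>W. mX = x \<or> lt mX x" using min_ex by blast
    have "lt 0 mX" using mX(1) unfolding W_def by auto
    then obtain h where h: "lt 0 h" "\<not> (h = mX \<or> lt mX h)" using noLP unfolding LP_def by blast
    then have hm: "lt h mX" using tot by blast
    have "h = mE \<or> lt h mE" using mX(1) hm tr unfolding W_def by blast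
    moreover have "h \<notin> W" using mX(2) h(2) by metis
    ultimately have "K < nrm h" using h(1) unfolding W_def by auto
    then show ?thesis using h(1) \<open>h = mE \<or> lt h mE\<close> by blast
  qed
  then obtain g where g: "lt 0 g" "K < nrm g" "g = mE \<or> lt g mE" by blast
  have "\<not> lt 0 (g - d) \<or> \<not> lt 0 (g + d)" if d: "d \<noteq> 0" "nrm d \<le> K" for d
  proof -
    have "ab d \<in> E" using d unfolding E_def D_def by auto
    then have "mE = ab d \<or> lt mE (ab d)" using mE(2) by blast
    then have gd: "g = ab d \<or> lt g (ab d)" using g(3) tr by blast
    show ?thesis
    proof (cases "lt 0 d")
      case True
      then have "g = d \<or> lt g d" using gd ab_def by simp
      then have "\<not> lt 0 (g - d)"
      proof
        assume "g = d" then show ?thesis using irr by simp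
      next
        assume "lt g d"
        then have "lt 0 (d - g)" using lt_sub by blast
        then show ?thesis using pos_neg[of "d - g"] by simp
      qed
      then show ?thesis by blast
    next
      case False
      then have "g = - d \<or> lt g (- d)" using gd ab_def by simp
      then have "\<not> lt 0 (g + d)"
      proof
        assume "g = - d" then show ?thesis using irr by simp
      next
        assume "lt g (- d)"
        then have "lt 0 (- d - g)" using lt_sub by blast
        then show ?thesis using pos_neg[of "- d - g"] by (simp add: algebra_simps)
      qed
      then show ?thesis by blast
    qed
  qed
  then show ?thesis using g by blast
qed

lemma ivt_nat: "P (a::int) \<noteq> P (a + int n) \<Longrightarrow> \<exists>k. P k \<noteq> P (k + 1)"
proof (induction n)
  case 0 then show ?case by simp
next
  case (Suc n)
  show ?case
  proof (cases "P (a + int n) = P a")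
    case True
    have e: "a + int n + 1 = a + int (Suc n)" by simp
    have "P (a + int n) \<noteq> P (a + int n + 1)" unfolding e using True Suc.prems by simp
    then show ?thesis by blast
  next
    case False then show ?thesis using Suc.IH by metis
  qed
qed

lemma ivt: "P (a::int) \<Longrightarrow> \<not> P b \<Longrightarrow> \<exists>k. P k \<noteq> P (k + 1)"
proof (cases "a \<le> b")
  case True
  assume "P a" "\<not> P b"
  then have "P a \<noteq> P (a + int (nat (b - a)))" using True by simp
  then show ?thesis by (rule ivt_nat)
next
  case False
  assume "P a" "\<not> P b"
  then have "P b \<noteq> P (b + int (nat (a - b)))" using False by simp
  then show ?thesis by (rule ivt_nat)
qed

lemma caseB:
  assumes s: "LP s"
  shows "\<exists>u. \<forall>k. lt (sm k s) u"
proof -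
  have spos: "lt 0 s" using s unfolding LP_def by blast
  have "\<exists>g. \<forall>k. g \<noteq> sm k s"
  proof (rule ccontr)
    assume "\<not> (\<exists>g. \<forall>k. g \<noteq> sm k s)"
    then obtain a b where "(1, 0) = sm a s" "(0, 1) = sm b s" by blast
    then have "a * fst s = 1" "a * snd s = 0" "b * fst s = 0" "b * snd s = 1" by (auto simp: sm_def)
    then show False by (metis mult_eq_0_iff zero_neq_one)
  qed
  then obtain g where g: "\<forall>k. g \<noteq> sm k s" by blast
  define T where "T k = lt (sm k s) g" for k
  have noT: "\<not> (T k \<noteq> T (k + 1))" for k
  proof
    assume ne: "T k \<noteq> T (k + 1)"
    have "sm (k + 1) s - sm k s = s" by simp
    then have step: "lt (sm k s) (sm (k + 1) s)" using lt_sub spos by metis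
    show False
    proof (cases "T k")
      case True
      then have nT: "\<not> lt (sm (k + 1) s) g" using ne T_def by simp
      then have "lt g (sm (k + 1) s)" using tot g by blast
      then have a1: "lt 0 (sm (k + 1) s - g)" using lt_sub by blast
      have a2: "lt 0 (g - sm k s)" using True T_def lt_sub by blast
      have e: "s - (g - sm k s) = sm (k + 1) s - g" by (simp add: algebra_simps)
      have "lt (g - sm k s) s" using lt_sub[of "g - sm k s" s] a1 e by simp
      moreover have "g - sm k s = s \<or> lt s (g - sm k s)" using s a2 unfolding LP_def by blast
      moreover have "g - sm k s \<noteq> s"
      proof
        assume "g - sm k s = s"
        then have "g = sm (k + 1) s" by (simp add: algebra_simps)
        then show False using g by blast
      qed
      ultimately have "lt s s" using tr by blast
      then show False using irr by blast
    next
      case False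
      then have "T (k + 1)" using ne by simp
      then show False using False step tr T_def by blast
    qed
  qed
  show ?thesis
  proof (cases "\<exists>k. T k")
    case True
    then obtain a where "T a" by blast
    show ?thesis
    proof (cases "\<forall>k. T k")
      case True then show ?thesis using T_def by blast
    next
      case False
      then obtain b where "\<not> T b" by blast
      then show ?thesis using ivt[of T a b] \<open>T a\<close> noT by blast
    qed
  next
    case False
    have "lt (sm k s) (- g)" for k
    proof -
      have "\<not> lt (sm (- k) s) g" using False T_def by blast
      then have "lt g (sm (- k) s)" using tot g by blast
      from lt_neg[OF this] show ?thesis by simp
    qed
    then show ?thesis by blast
  qed
qed

end

definition cI :: "nat list \<Rightarrow> int" where "cI c = int (count_list c 0) - int (count_list c 1)"
definition cK :: "nat list \<Rightarrow> int" where "cK c = int (count_list c 2) - int (count_list c 3)"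

lemma val_counts:
  assumes "d 1 = - d 0" "d 3 = - d 2"
  shows "c \<in> lists {0,1,2,3} \<Longrightarrow> sum_list (map d c) = sm (cI c) (d 0) + sm (cK c) (d 2)"
proof (induction c)
  case Nil then show ?case by (simp add: cI_def cK_def)
next
  case (Cons a c)
  then have a: "a = 0 \<or> a = 1 \<or> a = 2 \<or> a = 3" and IH: "sum_list (map d c) = sm (cI c) (d 0) + sm (cK c) (d 2)" by auto
  from a show ?case
  proof (elim disjE)
    assume "a = 0" then show ?thesis using IH by (simp add: cI_def cK_def algebra_simps)
  next
    assume "a = 1" then show ?thesis using IH assms by (simp add: cI_def cK_def algebra_simps)
  next
    assume "a = 2" then show ?thesis using IH by (simp add: cI_def cK_def algebra_simps)
  next
    assume "a = 3" then show ?thesis using IH assms by (simp add: cI_def cK_def algebra_simps)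
  qed
qed

lemma len_counts: "c \<in> lists {0,1,2,3::nat} \<Longrightarrow>
   length c = count_list c 0 + count_list c 1 + count_list c 2 + count_list c 3"
  by (induction c) auto

lemma count_rep: "count_list (replicate n x) y = (if x = y then n else 0)"
  by (induction n) auto

lemma pump_setup:
  assumes "context_free {0,1,2,3::nat} L"
  obtains K where "\<forall>w\<in>L. K < length w \<longrightarrow> (\<exists>pu pv px py pz. w = pu @ pv @ px @ py @ pz \<and> pv @ py \<noteq> [] \<and>
      length (pv @ px @ py) \<le> K \<and> pu @ px @ pz \<in> L \<and> pu @ (pv @ pv) @ px @ (py @ py) @ pz \<in> L)"
proof -
  obtain K where K: "\<forall>w\<in>L. K < length w \<longrightarrow>
     (\<exists>u v x y z. w = u @ v @ x @ y @ z \<and> v @ y \<noteq> [] \<and> length (v @ x @ y) \<le> K \<and>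
        (\<forall>i. u @ concat (replicate i v) @ x @ concat (replicate i y) @ z \<in> L))"
    using pump_cf[OF assms] by blast
  have "\<forall>w\<in>L. K < length w \<longrightarrow> (\<exists>pu pv px py pz. w = pu @ pv @ px @ py @ pz \<and> pv @ py \<noteq> [] \<and>
      length (pv @ px @ py) \<le> K \<and> pu @ px @ pz \<in> L \<and> pu @ (pv @ pv) @ px @ (py @ py) @ pz \<in> L)"
  proof (intro ballI impI)
    fix w assume "w \<in> L" "K < length w"
    then obtain u v x y z where h: "w = u @ v @ x @ y @ z" "v @ y \<noteq> []" "length (v @ x @ y) \<le> K"
        "\<forall>i. u @ concat (replicate i v) @ x @ concat (replicate i y) @ z \<in> L"
      using K by meson
    have "u @ x @ z \<in> L" using h(4)[rule_format, of 0] by simp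
    moreover have "u @ (v @ v) @ x @ (y @ y) @ z \<in> L" using h(4)[rule_format, of 2] by (simp add: numeral_2_eq_2)
    ultimately show "\<exists>pu pv px py pz. w = pu @ pv @ px @ py @ pz \<and> pv @ py \<noteq> [] \<and>
      length (pv @ px @ py) \<le> K \<and> pu @ px @ pz \<in> L \<and> pu @ (pv @ pv) @ px @ (py @ py) @ pz \<in> L"
      using h by blast
  qed
  then show ?thesis using that by blast
qed

lemma in_window:
  assumes "w = pu @ s @ pz" "a \<in> set s"
  shows "\<exists>i < length s. w ! (length pu + i) = a \<and> length pu + i < length w"
proof -
  obtain i where "i < length s" "s ! i = a" using assms(2) by (auto simp: in_set_conv_nth)
  then show ?thesis using assms(1) by (intro exI[of _ i]) (auto simp: nth_append)
qed

context z2ord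
begin

lemma lexpos_i:
  assumes u: "\<forall>k. lt (sm k s) u" and i: "0 < i"
  shows "lt 0 (sm i u + sm k s)"
proof -
  have "lt (sm (- k) s) u" using u by blast
  then have a: "lt 0 (u + sm k s)" using lt_sub[of "sm (- k) s" u] by simp
  have upos: "lt 0 u" using u[rule_format, of 0] by simp
  show ?thesis
  proof (cases "i = 1")
    case True then show ?thesis using a by simp
  next
    case False
    have "0 < i - 1" using i False by linarith
    then have "lt 0 (sm (i - 1) u)" by (rule sm_pos[OF upos])
    from add_pos[OF this a] have "lt 0 (sm (i - 1) u + (u + sm k s))" .
    moreover have "sm (i - 1) u + (u + sm k s) = sm i u + sm k s" by (simp add: sm_def prod_eq_iff algebra_simps)
    ultimately show ?thesis by simp
  qed
qed

lemma lexpos: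
  assumes u: "\<forall>k. lt (sm k s) u" and s: "lt 0 s" and p: "lt 0 (sm i u + sm k s)"
  shows "0 < i \<or> (i = 0 \<and> 0 < k)"
proof (rule ccontr)
  assume c: "\<not> (0 < i \<or> (i = 0 \<and> 0 < k))"
  show False
  proof (cases "i < 0")
    case True
    then have "0 < - i" by simp
    from lexpos_i[OF u this, of "- k"] have "lt 0 (sm (- i) u + sm (- k) s)" .
    moreover have "sm (- i) u + sm (- k) s = - (sm i u + sm k s)" by (simp add: sm_def prod_eq_iff)
    ultimately have "lt 0 (- (sm i u + sm k s))" by simp
    then show False using pos_neg[OF p] by blast
  next
    case False
    then have i0: "i = 0" "k \<le> 0" using c by auto
    show False
    proof (cases "k = 0")
      case True then show False using p i0 irr by simp
    next
      case False
      then have "0 < - k" using i0 by linarith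
      then have "lt 0 (sm (- k) s)" by (rule sm_pos[OF s])
      then have "lt 0 (- sm k s)" by simp
      moreover have "lt 0 (sm k s)" using p i0 by simp
      ultimately show False using pos_neg by blast
    qed
  qed
qed

lemma not_cf_B:
  assumes s: "LP s" and u: "\<forall>k. lt (sm k s) u"
    and d: "d = (\<lambda>i::nat. if i = 0 then u else if i = 1 then - u else if i = 2 then s else - s)"
  shows "\<not> context_free {0,1,2,3} {c \<in> lists {0,1,2,3}. lt 0 (sum_list (map d c))}"
proof
  let ?L = "{c \<in> lists {0,1,2,3}. lt 0 (sum_list (map d c))}"
  assume cf: "context_free {0,1,2,3} ?L"
  have spos: "lt 0 s" using s unfolding LP_def by blast
  have val: "c \<in> lists {0,1,2,3} \<Longrightarrow> sum_list (map d c) = sm (cI c) u + sm (cK c) s" for c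
    using val_counts[of d c] d by simp
  have memL: "c \<in> ?L \<Longrightarrow> 0 < cI c \<or> (cI c = 0 \<and> 0 < cK c)" for c
  proof -
    assume "c \<in> ?L"
    then have "c \<in> lists {0,1,2,3}" "lt 0 (sum_list (map d c))" by auto
    then have "lt 0 (sm (cI c) u + sm (cK c) s)" using val by simp
    then show ?thesis by (rule lexpos[OF u spos])
  qed
  obtain K where K: "\<forall>w\<in>?L. K < length w \<longrightarrow> (\<exists>pu pv px py pz. w = pu @ pv @ px @ py @ pz \<and> pv @ py \<noteq> [] \<and>
      length (pv @ px @ py) \<le> K \<and> pu @ px @ pz \<in> ?L \<and> pu @ (pv @ pv) @ px @ (py @ py) @ pz \<in> ?L)"
    using pump_setup[OF cf] by blast
  define m where "m = Suc K"
  define w where "w = replicate m (0::nat) @ replicate m 3 @ replicate m 1 @ replicate (Suc m) 2"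
  have wl: "w \<in> lists {0,1,2,3}" unfolding w_def by auto
  have cw: "count_list w 0 = m" "count_list w 1 = m" "count_list w 2 = Suc m" "count_list w 3 = m"
    unfolding w_def by (simp_all add: count_rep)
  have "sum_list (map d w) = s" using val[OF wl] cw by (simp add: cI_def cK_def)
  then have wL: "w \<in> ?L" using wl spos by simp
  have lw: "length w = 4 * m + 1" unfolding w_def by simp
  have nth: "j < 4 * m + 1 \<Longrightarrow> w ! j = (if j < m then 0 else if j < 2 * m then 3 else if j < 3 * m then 1 else 2)" for j
    unfolding w_def by (auto simp: nth_append nth_Cons')
  have "K < length w" using lw m_def by simp
  obtain pu pv px py pz where p: "w = pu @ pv @ px @ py @ pz" "pv @ py \<noteq> []" "length (pv @ px @ py) \<le> K"
    "pu @ px @ pz \<in> ?L" "pu @ (pv @ pv) @ px @ (py @ py) @ pz \<in> ?L"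
    using K[rule_format, OF wL \<open>K < length w\<close>] by (elim exE conjE) (rule that)
  have wsplit: "w = pu @ (pv @ px @ py) @ pz" using p(1) by simp
  have sep: "\<not> (a \<in> set (pv @ px @ py) \<and> b \<in> set (pv @ px @ py))"
    if ab: "(a = 0 \<and> b = 1) \<or> (a = 3 \<and> b = 2)" for a b
  proof
    assume ab2: "a \<in> set (pv @ px @ py) \<and> b \<in> set (pv @ px @ py)"
    obtain i1 where i1: "i1 < length (pv @ px @ py)" "w ! (length pu + i1) = a" "length pu + i1 < length w"
      using in_window[OF wsplit conjunct1[OF ab2]] by (elim exE conjE) (rule that)
    obtain i2 where i2: "i2 < length (pv @ px @ py)" "w ! (length pu + i2) = b" "length pu + i2 < length w"
      using in_window[OF wsplit conjunct2[OF ab2]] by (elim exE conjE) (rule that)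
    note i = i1 i2
    have pos0: "j < m" if "j < 4 * m + 1" "w ! j = 0" for j
      using nth[OF that(1)] that(2) by (simp split: if_splits)
    have pos1: "2 * m \<le> j" if "j < 4 * m + 1" "w ! j = 1" for j
      using nth[OF that(1)] that(2) by (simp split: if_splits)
    have pos3: "j < 2 * m" if "j < 4 * m + 1" "w ! j = 3" for j
      using nth[OF that(1)] that(2) by (simp split: if_splits)
    have pos2: "3 * m \<le> j" if "j < 4 * m + 1" "w ! j = 2" for j
      using nth[OF that(1)] that(2) by (simp split: if_splits)
    have bnd: "i1 < m" "i2 < m" using i(1,4) p(3) m_def by simp_all
    from ab show False
    proof
      assume ab0: "a = 0 \<and> b = 1"
      have "length pu + i1 < m" using pos0[of "length pu + i1"] i(2,3) lw ab0 by simp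
      moreover have "2 * m \<le> length pu + i2" using pos1[of "length pu + i2"] i(5,6) lw ab0 by simp
      ultimately show False using bnd by linarith
    next
      assume ab0: "a = 3 \<and> b = 2"
      have "length pu + i1 < 2 * m" using pos3[of "length pu + i1"] i(2,3) lw ab0 by simp
      moreover have "3 * m \<le> length pu + i2" using pos2[of "length pu + i2"] i(5,6) lw ab0 by simp
      ultimately show False using bnd by linarith
    qed
  qed
  define c0 where "c0 = count_list (pv @ py) 0"
  define c1 where "c1 = count_list (pv @ py) 1"
  define c2 where "c2 = count_list (pv @ py) 2"
  define c3 where "c3 = count_list (pv @ py) 3"
  have sub: "set (pv @ py) \<subseteq> set (pv @ px @ py)" by auto
  have z01: "c0 = 0 \<or> c1 = 0"
  proof (rule ccontr)
    assume "\<not> (c0 = 0 \<or> c1 = 0)"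
    then have "0 \<in> set (pv @ py)" "1 \<in> set (pv @ py)" unfolding c0_def c1_def by (auto simp: count_list_0_iff)
    then show False using sep[of 0 1] sub by blast
  qed
  have z23: "c2 = 0 \<or> c3 = 0"
  proof (rule ccontr)
    assume "\<not> (c2 = 0 \<or> c3 = 0)"
    then have "2 \<in> set (pv @ py)" "3 \<in> set (pv @ py)" unfolding c2_def c3_def by (auto simp: count_list_0_iff)
    then show False using sep[of 3 2] sub by blast
  qed
  have "pv @ py \<in> lists {0,1,2,3}" using wl p(1) by auto
  then have len: "length (pv @ py) = c0 + c1 + c2 + c3" unfolding c0_def c1_def c2_def c3_def by (rule len_counts)
  have "length (pv @ py) > 0" using p(2) by simp
  have A: "cI (pu @ px @ pz) = - (int c0 - int c1)" "cK (pu @ px @ pz) = 1 - (int c2 - int c3)"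
    using cw p(1) unfolding cI_def cK_def c0_def c1_def c2_def c3_def by simp_all
  have B: "cI (pu @ (pv @ pv) @ px @ (py @ py) @ pz) = int c0 - int c1"
    "cK (pu @ (pv @ pv) @ px @ (py @ py) @ pz) = 1 + (int c2 - int c3)"
    using cw p(1) unfolding cI_def cK_def c0_def c1_def c2_def c3_def by simp_all
  have M0: "0 < - (int c0 - int c1) \<or> (- (int c0 - int c1) = 0 \<and> 0 < 1 - (int c2 - int c3))"
    using memL[OF p(4)] A by simp
  have M2: "0 < int c0 - int c1 \<or> (int c0 - int c1 = 0 \<and> 0 < 1 + (int c2 - int c3))"
    using memL[OF p(5)] B by simp
  have "c0 = c1" using M0 M2 by linarith
  then have "c0 = 0" "c1 = 0" using z01 by auto
  then have "0 < 1 - (int c2 - int c3)" "0 < 1 + (int c2 - int c3)" using M0 M2 by simp_all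
  then have "c2 = c3" by linarith
  then have "c2 = 0" "c3 = 0" using z23 by auto
  then show False using len \<open>length (pv @ py) > 0\<close> \<open>c0 = 0\<close> \<open>c1 = 0\<close> by simp
qed

lemma not_cf_A:
  assumes noLP: "\<not> (\<exists>s. LP s)"
    and d: "d = (\<lambda>i::nat. if i = 0 then (1,0) else if i = 1 then (-1,0) else if i = 2 then (0,1) else (0,-1))"
  shows "\<not> context_free {0,1,2,3} {c \<in> lists {0,1,2,3}. lt 0 (sum_list (map d c))}"
proof
  let ?L = "{c \<in> lists {0,1,2,3}. lt 0 (sum_list (map d c))}"
  assume cf: "context_free {0,1,2,3} ?L"
  have val: "c \<in> lists {0,1,2,3} \<Longrightarrow> sum_list (map d c) = (cI c, cK c)" for c
    using val_counts[of d c] d by (simp add: sm_def)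
  obtain K where K: "\<forall>w\<in>?L. K < length w \<longrightarrow> (\<exists>pu pv px py pz. w = pu @ pv @ px @ py @ pz \<and> pv @ py \<noteq> [] \<and>
      length (pv @ px @ py) \<le> K \<and> pu @ px @ pz \<in> ?L \<and> pu @ (pv @ pv) @ px @ (py @ py) @ pz \<in> ?L)"
    using pump_setup[OF cf] by blast
  obtain g where g: "lt 0 g" "int K < nrm g"
    "\<forall>d. d \<noteq> 0 \<and> nrm d \<le> int K \<longrightarrow> \<not> lt 0 (g - d) \<or> \<not> lt 0 (g + d)"
    using caseA[OF noLP, of "int K"] by blast
  define la where "la = (if 0 \<le> fst g then 0 else (1::nat))"
  define lb where "lb = (if 0 \<le> snd g then 2 else (3::nat))"
  define w where "w = replicate (nat \<bar>fst g\<bar>) la @ replicate (nat \<bar>snd g\<bar>) lb"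
  have wl: "w \<in> lists {0,1,2,3}" unfolding w_def la_def lb_def by auto
  have "cI w = fst g" "cK w = snd g"
    unfolding w_def cI_def cK_def la_def lb_def by (auto simp: count_rep split: if_splits)
  then have wv: "sum_list (map d w) = g" using val[OF wl] by simp
  then have wL: "w \<in> ?L" using wl g(1) by simp
  have lw: "K < length w" using g(2) unfolding w_def nrm_def by simp
  obtain pu pv px py pz where p: "w = pu @ pv @ px @ py @ pz" "pv @ py \<noteq> []" "length (pv @ px @ py) \<le> K"
    "pu @ px @ pz \<in> ?L" "pu @ (pv @ pv) @ px @ (py @ py) @ pz \<in> ?L"
    using K[rule_format, OF wL lw] by (elim exE conjE) (rule that)
  have sw: "set w \<subseteq> {la, lb}" unfolding w_def by auto
  have svy: "set (pv @ py) \<subseteq> {la, lb}" using sw p(1) by auto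
  define c0 where "c0 = count_list (pv @ py) 0"
  define c1 where "c1 = count_list (pv @ py) 1"
  define c2 where "c2 = count_list (pv @ py) 2"
  define c3 where "c3 = count_list (pv @ py) 3"
  have z01: "c0 = 0 \<or> c1 = 0"
  proof (rule ccontr)
    assume "\<not> (c0 = 0 \<or> c1 = 0)"
    then have "0 \<in> set (pv @ py)" "1 \<in> set (pv @ py)" unfolding c0_def c1_def by (auto simp: count_list_0_iff)
    then show False using svy unfolding la_def lb_def by (auto split: if_splits)
  qed
  have z23: "c2 = 0 \<or> c3 = 0"
  proof (rule ccontr)
    assume "\<not> (c2 = 0 \<or> c3 = 0)"
    then have "2 \<in> set (pv @ py)" "3 \<in> set (pv @ py)" unfolding c2_def c3_def by (auto simp: count_list_0_iff)
    then show False using svy unfolding la_def lb_def by (auto split: if_splits)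
  qed
  have "pv @ py \<in> lists {0,1,2,3}" using wl p(1) by auto
  then have len: "length (pv @ py) = c0 + c1 + c2 + c3" unfolding c0_def c1_def c2_def c3_def by (rule len_counts)
  have lpos: "length (pv @ py) > 0" using p(2) by simp
  have lK: "length (pv @ py) \<le> K" using p(3) by simp
  define dd where "dd = (int c0 - int c1, int c2 - int c3)"
  have nd: "nrm dd = int (length (pv @ py))" unfolding nrm_def dd_def using len z01 z23 by auto
  have dd: "dd \<noteq> 0" "nrm dd \<le> int K"
  proof -
    show "dd \<noteq> 0"
    proof
      assume "dd = 0"
      then have "nrm dd = 0" by (simp add: nrm_def)
      then have "length (pv @ py) = 0" using nd by linarith
      then show False using lpos by linarith
    qed
    show "nrm dd \<le> int K" using nd lK by simp
  qed
  have I0: "cI (pu @ px @ pz) = cI w - (int c0 - int c1)" "cK (pu @ px @ pz) = cK w - (int c2 - int c3)"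
    unfolding cI_def cK_def c0_def c1_def c2_def c3_def using p(1) by simp_all
  have I2: "cI (pu @ (pv @ pv) @ px @ (py @ py) @ pz) = cI w + (int c0 - int c1)"
    "cK (pu @ (pv @ pv) @ px @ (py @ py) @ pz) = cK w + (int c2 - int c3)"
    unfolding cI_def cK_def c0_def c1_def c2_def c3_def using p(1) by simp_all
  have l0: "pu @ px @ pz \<in> lists {0,1,2,3}" and l2: "pu @ (pv @ pv) @ px @ (py @ py) @ pz \<in> lists {0,1,2,3}"
    using p(4,5) by blast+
  have e0: "(cI (pu @ px @ pz), cK (pu @ px @ pz)) = g - dd"
    unfolding I0 \<open>cI w = fst g\<close> \<open>cK w = snd g\<close> dd_def by (simp add: prod_eq_iff)
  have e2: "(cI (pu @ (pv @ pv) @ px @ (py @ py) @ pz), cK (pu @ (pv @ pv) @ px @ (py @ py) @ pz)) = g + dd"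
    unfolding I2 \<open>cI w = fst g\<close> \<open>cK w = snd g\<close> dd_def by (simp add: prod_eq_iff)
  have v0: "sum_list (map d (pu @ px @ pz)) = g - dd" using trans[OF val[OF l0] e0] .
  have v2: "sum_list (map d (pu @ (pv @ pv) @ px @ (py @ py) @ pz)) = g + dd" using trans[OF val[OF l2] e2] .
  have "lt 0 (g - dd)" "lt 0 (g + dd)" using p(4,5) unfolding v0[symmetric] v2[symmetric] by blast+
  then show False using g(3) dd by blast
qed

lemma core:
  "\<exists>d :: nat \<Rightarrow> int \<times> int. d 0 \<noteq> 0 \<and> d 1 = - d 0 \<and> d 2 \<noteq> 0 \<and> d 3 = - d 2 \<and>
     \<not> context_free {0,1,2,3} {c \<in> lists {0,1,2,3}. lt 0 (sum_list (map d c))}"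
proof (cases "\<exists>s. LP s")
  case True
  then obtain s where s: "LP s" by blast
  obtain u where u: "\<forall>k. lt (sm k s) u" using caseB[OF s] by blast
  define d where "d = (\<lambda>i::nat. if i = 0 then u else if i = 1 then - u else if i = 2 then s else - s)"
  have "lt 0 u" using u[rule_format, of 0] by simp
  then have "u \<noteq> 0" using irr by blast
  moreover have "s \<noteq> 0" using s irr unfolding LP_def by blast
  ultimately show ?thesis using not_cf_B[OF s u d_def] by (intro exI[of _ d]) (simp add: d_def)
next
  case False
  define d where "d = (\<lambda>i::nat. if i = 0 then (1::int,0::int) else if i = 1 then (-1,0) else if i = 2 then (0,1) else (0,-1))"
  show ?thesis using not_cf_A[OF False d_def] by (intro exI[of _ d]) (simp add: d_def prod_eq_iff)
qed

end

lemma Z2_mult: "x \<otimes>\<^bsub>Z2\<^esub> y = x + y"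
  by (cases x, cases y) (simp add: Z2_def)

lemma Z2_one: "\<one>\<^bsub>Z2\<^esub> = 0"
  by (simp add: Z2_def zero_prod_def)

lemma Z2_carrier: "carrier Z2 = UNIV"
  by (simp add: Z2_def)

lemma group_Z2: "group Z2"
proof (rule groupI)
  fix x assume "x \<in> carrier Z2"
  show "\<exists>y\<in>carrier Z2. y \<otimes>\<^bsub>Z2\<^esub> x = \<one>\<^bsub>Z2\<^esub>"
    by (rule bexI[of _ "- x"]) (simp_all add: Z2_mult Z2_one Z2_carrier)
qed (simp_all add: Z2_mult Z2_one Z2_carrier algebra_simps)

lemma word_eval_closed:
  assumes "monoid G" "f ` A \<subseteq> carrier G"
  shows "xs \<in> lists A \<Longrightarrow> word_eval G f xs \<in> carrier G"
proof (induction xs)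
  case Nil then show ?case using assms(1) by (simp add: word_eval_def monoid.one_closed)
next
  case (Cons x xs)
  then have "f x \<in> carrier G" "word_eval G f xs \<in> carrier G" using assms(2) by auto
  then show ?case using assms(1) by (simp add: word_eval_def monoid.m_closed)
qed

lemma word_eval_append:
  assumes "monoid G" "f ` A \<subseteq> carrier G"
  shows "xs \<in> lists A \<Longrightarrow> ys \<in> lists A \<Longrightarrow>
    word_eval G f (xs @ ys) = word_eval G f xs \<otimes>\<^bsub>G\<^esub> word_eval G f ys"
proof (induction xs)
  case Nil
  then show ?case using assms word_eval_closed[OF assms Nil(2)]
    by (simp add: word_eval_def monoid.l_one)
next
  case (Cons x xs)
  then have c: "f x \<in> carrier G" "word_eval G f xs \<in> carrier G" "word_eval G f ys \<in> carrier G"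
    using assms word_eval_closed[OF assms] by auto
  have "word_eval G f ((x # xs) @ ys) = f x \<otimes>\<^bsub>G\<^esub> word_eval G f (xs @ ys)"
    by (simp add: word_eval_def)
  also have "\<dots> = f x \<otimes>\<^bsub>G\<^esub> (word_eval G f xs \<otimes>\<^bsub>G\<^esub> word_eval G f ys)" using Cons by simp
  also have "\<dots> = (f x \<otimes>\<^bsub>G\<^esub> word_eval G f xs) \<otimes>\<^bsub>G\<^esub> word_eval G f ys"
    using c assms(1) by (simp add: monoid.m_assoc)
  also have "f x \<otimes>\<^bsub>G\<^esub> word_eval G f xs = word_eval G f (x # xs)" by (simp add: word_eval_def)
  finally show ?case .
qed

lemma main:
  assumes grp: "group G" and lo: "left_order G lt" and gs: "finite_generating_set G (A :: nat set) f"
    and cf: "context_free A {w \<in> lists A. word_eval G f w \<in> positive_cone G lt}"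
    and sg: "subgroup H G" and iso: "\<phi> \<in> iso (G\<lparr>carrier := H\<rparr>) Z2"
  shows False
proof -
  have mon: "monoid G" using grp by (simp add: group.is_monoid)
  have fA: "f ` A \<subseteq> carrier G" "finite A" using gs unfolding finite_generating_set_def by auto
  have Hsub: "H \<subseteq> carrier G" using sg by (rule subgroup.subset)
  have hom: "\<And>x y. x \<in> H \<Longrightarrow> y \<in> H \<Longrightarrow> \<phi> (x \<otimes>\<^bsub>G\<^esub> y) = \<phi> x + \<phi> y"
    using iso unfolding iso_def hom_def by (simp add: Z2_mult)
  have bij: "bij_betw \<phi> H UNIV" using iso unfolding iso_def by (simp add: Z2_carrier)
  define \<psi> where "\<psi> = inv_into H \<phi>"
  have \<psi>H: "\<psi> v \<in> H" for v using bij unfolding \<psi>_def bij_betw_def by (simp add: inv_into_into)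
  have \<phi>\<psi>: "\<phi> (\<psi> v) = v" for v using bij unfolding \<psi>_def bij_betw_def by (simp add: f_inv_into_f)
  have \<psi>\<phi>: "h \<in> H \<Longrightarrow> \<psi> (\<phi> h) = h" for h using bij unfolding \<psi>_def bij_betw_def by (simp add: inv_into_f_f)
  have \<psi>G: "\<psi> v \<in> carrier G" for v using \<psi>H Hsub by blast
  have \<psi>add: "\<psi> (a + b) = \<psi> a \<otimes>\<^bsub>G\<^esub> \<psi> b" for a b
  proof -
    have m: "\<psi> a \<otimes>\<^bsub>G\<^esub> \<psi> b \<in> H" using sg \<psi>H by (simp add: subgroup.m_closed)
    have "\<phi> (\<psi> a \<otimes>\<^bsub>G\<^esub> \<psi> b) = a + b" using hom[OF \<psi>H \<psi>H] \<phi>\<psi> by simp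
    then show ?thesis using \<psi>\<phi>[OF m] by metis
  qed
  have one: "\<one>\<^bsub>G\<^esub> \<in> H" using sg by (rule subgroup.one_closed)
  have "\<phi> \<one>\<^bsub>G\<^esub> = \<phi> \<one>\<^bsub>G\<^esub> + \<phi> \<one>\<^bsub>G\<^esub>" using hom[OF one one] mon by (simp add: monoid.l_one)
  then have "\<phi> \<one>\<^bsub>G\<^esub> = 0" by (simp add: prod_eq_iff)
  then have \<psi>0: "\<psi> 0 = \<one>\<^bsub>G\<^esub>" using \<psi>\<phi>[OF one] by simp
  have \<psi>inj: "\<psi> a = \<psi> b \<Longrightarrow> a = b" for a b using \<phi>\<psi> by metis
  define lt' where "lt' a b = lt (\<psi> a) (\<psi> b)" for a b
  have lo': "left_order G lt" by (fact lo)
  have zo: "z2ord lt'"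
  proof
    fix a show "\<not> lt' a a" using lo \<psi>G unfolding left_order_def lt'_def by blast
  next
    fix a b c assume "lt' a b" "lt' b c"
    then show "lt' a c" using lo \<psi>G unfolding left_order_def lt'_def by blast
  next
    fix a b :: "int \<times> int" assume "a \<noteq> b"
    then have "\<psi> a \<noteq> \<psi> b" using \<psi>inj by blast
    then show "lt' a b \<or> lt' b a" using lo \<psi>G unfolding left_order_def lt'_def by blast
  next
    fix a b c assume "lt' a b"
    then have "lt (\<psi> c \<otimes>\<^bsub>G\<^esub> \<psi> a) (\<psi> c \<otimes>\<^bsub>G\<^esub> \<psi> b)" using lo \<psi>G unfolding left_order_def lt'_def by blast
    then show "lt' (c + a) (c + b)" unfolding lt'_def \<psi>add by simp
  qed
  obtain d :: "nat \<Rightarrow> int \<times> int" where d: "d 0 \<noteq> 0" "d 1 = - d 0" "d 2 \<noteq> 0" "d 3 = - d 2"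
    "\<not> context_free {0,1,2,3} {c \<in> lists {0,1,2,3}. lt' 0 (sum_list (map d c))}"
    using z2ord.core[OF zo] by blast
  have dne: "i \<in> {0,1,2,3} \<Longrightarrow> d i \<noteq> 0" for i using d(1-4) by auto
  have "\<exists>w \<in> lists A. word_eval G f w = \<psi> (d i)" for i
    using gs \<psi>G unfolding finite_generating_set_def by blast
  then obtain h where h: "\<And>i. h i \<in> lists A" "\<And>i. word_eval G f (h i) = \<psi> (d i)" by metis
  have hne: "i \<in> {0,1,2,3} \<Longrightarrow> h i \<noteq> []" for i
  proof
    assume "i \<in> {0,1,2,3}" "h i = []"
    then have "\<psi> (d i) = \<psi> 0" using h(2)[of i] \<psi>0 by (simp add: word_eval_def)
    then show False using \<psi>inj dne \<open>i \<in> {0,1,2,3}\<close> by blast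
  qed
  have cl: "concat (map h c) \<in> lists A" for c using h(1) by (induction c) auto
  have ev: "word_eval G f (concat (map h c)) = \<psi> (sum_list (map d c))" for c
  proof (induction c)
    case Nil then show ?case using \<psi>0 by (simp add: word_eval_def)
  next
    case (Cons a c)
    have "word_eval G f (concat (map h (a # c))) = word_eval G f (h a) \<otimes>\<^bsub>G\<^esub> word_eval G f (concat (map h c))"
      using word_eval_append[OF mon fA(1) h(1) cl] by simp
    also have "\<dots> = \<psi> (d a) \<otimes>\<^bsub>G\<^esub> \<psi> (sum_list (map d c))" using Cons h(2) by simp
    also have "\<dots> = \<psi> (sum_list (map d (a # c)))" using \<psi>add by simp
    finally show ?case .
  qed
  have eq: "{c \<in> lists {0,1,2,3}. concat (map h c) \<in> {w \<in> lists A. word_eval G f w \<in> positive_cone G lt}}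
      = {c \<in> lists {0,1,2,3}. lt' 0 (sum_list (map d c))}"
    using cl ev \<psi>G \<psi>0 unfolding positive_cone_def lt'_def by auto
  have "context_free {0,1,2,3} {c \<in> lists {0,1,2,3}. concat (map h c) \<in> {w \<in> lists A. word_eval G f w \<in> positive_cone G lt}}"
    by (rule invhom_cf[OF cf]) (use h(1) hne in auto)
  then show False using d(5) eq by simp
qed

theorem propositionA6:
  shows "(\<forall>lt. \<not> cf_preimage_left_order Z2 lt) \<and>
         (\<forall>(G :: ('g, 'b) monoid_scheme) lt.
             group G \<and> finitely_generated G \<and> cf_preimage_left_order G lt \<longrightarrow>
             \<not> (\<exists>H. subgroup H G \<and> G\<lparr>carrier := H\<rparr> \<cong> Z2))"
proof (intro conjI allI impI notI)
  fix lt assume "cf_preimage_left_order Z2 lt"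
  then obtain A :: "nat set" and f where "left_order Z2 lt" "finite_generating_set Z2 A f"
    "context_free A {w \<in> lists A. word_eval Z2 f w \<in> positive_cone Z2 lt}"
    unfolding cf_preimage_left_order_def by blast
  moreover have "subgroup (carrier Z2) Z2" using group.subgroup_self[OF group_Z2] .
  moreover have "(\<lambda>x. x) \<in> iso (Z2\<lparr>carrier := carrier Z2\<rparr>) Z2"
    using iso_set_refl[of Z2] by simp
  ultimately show False using main[OF group_Z2] by blast
next
  fix G :: "('g, 'b) monoid_scheme" and lt
  assume a: "group G \<and> finitely_generated G \<and> cf_preimage_left_order G lt"
    and "\<exists>H. subgroup H G \<and> G\<lparr>carrier := H\<rparr> \<cong> Z2"
  then obtain H \<phi> where H: "subgroup H G" "\<phi> \<in> iso (G\<lparr>carrier := H\<rparr>) Z2"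
    unfolding is_iso_def by blast
  from a obtain A :: "nat set" and f where "left_order G lt" "finite_generating_set G A f"
    "context_free A {w \<in> lists A. word_eval G f w \<in> positive_cone G lt}"
    unfolding cf_preimage_left_order_def by blast
  then show False using main[OF conjunct1[OF a] _ _ _ H] by blast
qed

end
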